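(* Let $A,B\in\mathcal{B}(\mathcal{H})$ and let $f,g$ be nonnegative continuous functions on $[0,\infty)$ satisfying $f(t)g(t)=t$ for all $t\geq0$. Then for every unit vector $x\in\mathcal{H}$, all $r,s\geq 1$ and all $0<\alpha<1$, $$|\langle Ax,x\rangle|^r|\langle Bx,x\rangle|^s\leq \frac12\left\|\alpha f^{\frac{2r}{\alpha}}(|A|)+\alpha g^{\frac{2r}{\alpha}}(|A^*|)+(1-\alpha)f^{\frac{2s}{1-\alpha}}(|B|)+(1-\alpha)g^{\frac{2s}{1-\alpha}}(|B^*|)\right\|.$$
   Context: $\mathcal{H}$ is a complex Hilbert space, $\mathcal{B}(\mathcal{H})$ the bounded linear operators on it. For $T\in\mathcal{B}(\mathcal{H})$, $|T|=(T^*T)^{1/2}$, and $f(|T|)$ etc. are defined by continuous functional calculus; $f^{p}(|A|)$ means $(f(|A|))^{p}$. *)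

theory Defs
  imports "HOL-Analysis.Analysis" "HOL-Computational_Algebra.Polynomial"
begin

class complex_vector = real_vector +
  fixes scaleC :: "complex \<Rightarrow> 'a \<Rightarrow> 'a"
  assumes scaleC_add_right: "scaleC c (x + y) = scaleC c x + scaleC c y"
    and scaleC_add_left: "scaleC (c + d) x = scaleC c x + scaleC d x"
    and scaleC_scaleC: "scaleC c (scaleC d x) = scaleC (c * d) x"
    and scaleC_one: "scaleC 1 x = x"
    and scaleR_scaleC: "scaleR r x = scaleC (complex_of_real r) x"

class complex_inner = complex_vector + real_normed_vector +
  fixes cinner :: "'a \<Rightarrow> 'a \<Rightarrow> complex"
  assumes cinner_commute: "cinner y x = cnj (cinner x y)"
    and cinner_add_left: "cinner (x + y) z = cinner x z + cinner y z"
    and cinner_scaleC_left: "cinner (scaleC c x) y = c * cinner x y"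
    and cinner_ge_zero: "0 \<le> Re (cinner x x)"
    and norm_eq_sqrt_cinner: "norm x = sqrt (Re (cinner x x))"

class chilbert_space = complex_inner + complete_space

definition bounded_clinear :: "('a::complex_inner \<Rightarrow> 'a) \<Rightarrow> bool" where
  "bounded_clinear T \<longleftrightarrow> bounded_linear T \<and> (\<forall>c x. T (scaleC c x) = scaleC c (T x))"

definition adj :: "('a::complex_inner \<Rightarrow> 'a) \<Rightarrow> ('a \<Rightarrow> 'a)" where
  "adj T = (THE S. \<forall>x y. cinner (T x) y = cinner x (S y))"

definition op_poly :: "real poly \<Rightarrow> ('a::complex_inner \<Rightarrow> 'a) \<Rightarrow> ('a \<Rightarrow> 'a)" where
  "op_poly p P = (\<lambda>x. \<Sum>i\<le>degree p. coeff p i *\<^sub>R (P ^^ i) x)"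

text \<open>Continuous functional calculus for a positive operator P (spectrum contained in
  [0, norm P]): f(P) is the operator-norm limit of p_n(P) for any sequence of polynomials
  converging uniformly to f on [0, norm P].\<close>
definition fcalc :: "(real \<Rightarrow> real) \<Rightarrow> ('a::complex_inner \<Rightarrow> 'a) \<Rightarrow> ('a \<Rightarrow> 'a)" where
  "fcalc f P = (THE T. bounded_clinear T \<and>
     (\<forall>p :: nat \<Rightarrow> real poly. uniform_limit {0..onorm P} (\<lambda>n t. poly (p n) t) f sequentially
        \<longrightarrow> (\<lambda>n. onorm (\<lambda>x. op_poly (p n) P x - T x)) \<longlonglongrightarrow> 0))"

definition op_abs :: "('a::complex_inner \<Rightarrow> 'a) \<Rightarrow> ('a \<Rightarrow> 'a)" where
  "op_abs T = fcalc sqrt (\<lambda>x. adj T (T x))"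

end

theory Submission
  imports Defs
begin

lemma scaleC_zero_right[simp]: "scaleC c (0::'a::complex_vector) = 0"
  using scaleC_add_right[of c "0::'a" 0] by simp

lemma scaleC_zero_left[simp]: "scaleC 0 (x::'a::complex_vector) = 0"
  using scaleC_add_left[of 0 0 x] by simp

lemma scaleC_minus_left: "scaleC (- c) (x::'a::complex_vector) = - scaleC c x"
proof -
  have "scaleC (- c) x + scaleC c x = 0" using scaleC_add_left[of "-c" c x] by simp
  then show ?thesis by (simp add: eq_neg_iff_add_eq_0)
qed

lemma scaleC_minus_right: "scaleC c (- x::'a::complex_vector) = - scaleC c x"
proof -
  have "scaleC c (- x) + scaleC c x = 0" using scaleC_add_right[of c "-x" x] by simp
  then show ?thesis by (simp add: eq_neg_iff_add_eq_0)
qed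

lemma scaleC_diff_right: "scaleC c (x - y::'a::complex_vector) = scaleC c x - scaleC c y"
  using scaleC_add_right[of c x "-y"] by (simp add: scaleC_minus_right)

lemma scaleC_diff_left: "scaleC (c - d) (x::'a::complex_vector) = scaleC c x - scaleC d x"
  using scaleC_add_left[of c "-d" x] by (simp add: scaleC_minus_left)

lemma scaleC_of_real: "scaleC (complex_of_real r) (x::'a::complex_vector) = scaleR r x"
  by (simp add: scaleR_scaleC)

lemma minus_scaleC: "- (x::'a::complex_vector) = scaleC (-1) x"
  by (simp add: scaleC_minus_left scaleC_one)

lemma cinner_zero_left[simp]: "cinner 0 (y::'a::complex_inner) = 0"
  using cinner_scaleC_left[of 0 "0::'a" y] by simp

lemma cinner_zero_right[simp]: "cinner (x::'a::complex_inner) 0 = 0"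
  using cinner_commute[of x "0::'a"] by simp

lemma cinner_add_right: "cinner (x::'a::complex_inner) (y + z) = cinner x y + cinner x z"
  using cinner_commute[of x "y+z"] cinner_commute[of x y] cinner_commute[of x z]
  by (simp add: cinner_add_left)

lemma cinner_scaleC_right: "cinner (x::'a::complex_inner) (scaleC c y) = cnj c * cinner x y"
  using cinner_commute[of x "scaleC c y"] cinner_commute[of x y]
  by (simp add: cinner_scaleC_left)

lemma cinner_minus_left: "cinner (- x::'a::complex_inner) y = - cinner x y"
  by (simp add: minus_scaleC cinner_scaleC_left)

lemma cinner_minus_right: "cinner (x::'a::complex_inner) (- y) = - cinner x y"
  by (simp add: minus_scaleC cinner_scaleC_right)

lemma cinner_diff_left: "cinner (x - y::'a::complex_inner) z = cinner x z - cinner y z"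
  using cinner_add_left[of x "-y" z] by (simp add: cinner_minus_left)

lemma cinner_diff_right: "cinner (x::'a::complex_inner) (y - z) = cinner x y - cinner x z"
  using cinner_add_right[of x y "-z"] by (simp add: cinner_minus_right)

lemma cinner_scaleR_left: "cinner (scaleR r x::'a::complex_inner) y = of_real r * cinner x y"
  by (simp add: scaleR_scaleC cinner_scaleC_left)

lemma cinner_scaleR_right: "cinner (x::'a::complex_inner) (scaleR r y) = of_real r * cinner x y"
  by (simp add: scaleR_scaleC cinner_scaleC_right)

lemma cinner_self_Im: "Im (cinner (x::'a::complex_inner) x) = 0"
proof -
  have "Im (cinner x x) = Im (cnj (cinner x x))" by (rule arg_cong[OF cinner_commute])
  then show ?thesis by simp
qed

lemma cinner_self_real: "cinner (x::'a::complex_inner) x = of_real ((norm x)^2)"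
proof -
  have "Re (cinner x x) = (norm x)^2" using norm_eq_sqrt_cinner[of x] cinner_ge_zero[of x] by simp
  then show ?thesis using cinner_self_Im[of x] by (simp add: complex_eq_iff)
qed

lemma Re_cinner_self: "Re (cinner (x::'a::complex_inner) x) = (norm x)^2"
  by (simp add: cinner_self_real)

lemma norm_scaleC: "norm (scaleC c (x::'a::complex_inner)) = cmod c * norm x"
proof -
  have e: "cinner (scaleC c x) (scaleC c x) = (c * cnj c) * cinner x x"
    by (simp add: cinner_scaleC_left cinner_scaleC_right mult.assoc)
  have "(norm (scaleC c x))^2 = Re (c * cnj c * cinner x x)"
    by (simp only: Re_cinner_self[symmetric] e)
  also have "\<dots> = (cmod c * norm x)^2"
    by (simp only: cinner_self_real complex_mult_cnj power_mult_distrib flip: of_real_mult Re_complex_of_real) (simp add: cmod_power2)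
  finally show ?thesis by (simp add: power2_eq_iff_nonneg)
qed

lemma quad_disc:
  fixes a m c :: real
  assumes "m \<ge> 0" "c \<ge> 0" "\<And>t. 0 \<le> a - 2 * t * m + t^2 * m * c"
  shows "m \<le> a * c"
proof (cases "c = 0")
  case True
  show ?thesis
  proof (rule ccontr)
    assume "\<not> m \<le> a * c"
    then have "m > 0" using True by simp
    have "0 \<le> a - 2 * ((a+1)/(2*m)) * m + ((a+1)/(2*m))^2 * m * c" by (rule assms(3))
    then show False using True \<open>m>0\<close> by (simp add: field_simps)
  qed
next
  case False
  then have c: "c > 0" using assms(2) by simp
  have "0 \<le> a - 2 * (1/c) * m + (1/c)^2 * m * c" by (rule assms(3))
  then have "0 \<le> a - m / c" using c by (simp add: field_simps power2_eq_square)
  then show ?thesis using c by (simp add: field_simps)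
qed

definition sadj :: "('a::complex_inner \<Rightarrow> 'a) \<Rightarrow> bool" where
  "sadj T \<longleftrightarrow> (\<forall>x y. cinner (T x) y = cinner x (T y))"

definition posop :: "('a::complex_inner \<Rightarrow> 'a) \<Rightarrow> bool" where
  "posop T \<longleftrightarrow> bounded_clinear T \<and> sadj T \<and> (\<forall>x. 0 \<le> Re (cinner (T x) x))"

lemma bounded_clinear_linear: "bounded_clinear T \<Longrightarrow> bounded_linear T"
  by (simp add: bounded_clinear_def)

lemma bclin_scaleC: "bounded_clinear T \<Longrightarrow> T (scaleC c x) = scaleC c (T x)"
  by (simp add: bounded_clinear_def)

lemma bclin_add: "bounded_clinear T \<Longrightarrow> T (x + y) = T x + T y"
  by (simp add: bounded_clinear_def linear_add bounded_linear.linear)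

lemma bclin_diff: "bounded_clinear T \<Longrightarrow> T (x - y) = T x - T y"
  by (simp add: bounded_clinear_def linear_diff bounded_linear.linear)

lemma bclin_zero: "bounded_clinear T \<Longrightarrow> T 0 = 0"
  by (simp add: bounded_clinear_def linear_0 bounded_linear.linear)

lemma bclin_minus: "bounded_clinear T \<Longrightarrow> T (- x) = - T x"
  by (simp add: bounded_clinear_def linear_neg bounded_linear.linear)

lemma sadj_cinner_real: "sadj T \<Longrightarrow> cinner (T x) x = of_real (Re (cinner (T x) x))"
proof -
  assume "sadj T"
  then have "cinner (T x) x = cinner x (T x)" by (simp add: sadj_def)
  also have "\<dots> = cnj (cinner (T x) x)" by (rule cinner_commute)
  finally have "Im (cinner (T x) x) = Im (cnj (cinner (T x) x))" by simp
  then show ?thesis by (simp add: complex_eq_iff)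
qed

lemma pos_cs:
  assumes "posop T"
  shows "(cmod (cinner (T x) y))^2 \<le> Re (cinner (T x) x) * Re (cinner (T y) y)"
proof -
  have bc: "bounded_clinear T" and sa: "sadj T" and pos: "\<And>z. 0 \<le> Re (cinner (T z) z)"
    using assms by (auto simp: posop_def)
  define b where "b = cinner (T x) y"
  define a where "a = Re (cinner (T x) x)"
  define c where "c = Re (cinner (T y) y)"
  have byx: "cinner (T y) x = cnj b"
    using sa cinner_commute[of "T x" y] by (simp add: b_def sadj_def)
  have "(cmod b)^2 \<le> a * c"
  proof (rule quad_disc)
    show "0 \<le> (cmod b)^2" by simp
    show "0 \<le> c" using pos c_def by simp
    fix t :: real
    define l where "l = complex_of_real t * b"
    have "0 \<le> Re (cinner (T (x - scaleC l y)) (x - scaleC l y))" by (rule pos)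
    also have "cinner (T (x - scaleC l y)) (x - scaleC l y)
        = cinner (T x) x - cnj l * b - l * cnj b + l * cnj l * cinner (T y) y"
      by (simp add: bclin_diff[OF bc] bclin_scaleC[OF bc] cinner_diff_left cinner_diff_right
          cinner_scaleC_left cinner_scaleC_right byx b_def algebra_simps)
    also have "Re \<dots> = a - 2 * t * (cmod b)^2 + t^2 * (cmod b)^2 * c"
    proof -
      have mm: "cmod b * cmod b = Re b * Re b + Im b * Im b"
        using cmod_power2[of b] by (simp add: power2_eq_square)
      have r: "cinner (T y) y = of_real c" using sadj_cinner_real[OF sa] c_def by simp
      have "cnj l * b = of_real (t * (cmod b)^2)" "l * cnj b = of_real (t * (cmod b)^2)"
        "l * cnj l = of_real (t^2 * (cmod b)^2)"
        using mm by (simp_all add: l_def complex_eq_iff algebra_simps power2_eq_square)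
      then show ?thesis by (simp add: r a_def power2_eq_square)
    qed
    finally show "0 \<le> a - 2 * t * (cmod b)^2 + t^2 * (cmod b)^2 * c" .
  qed
  then show ?thesis by (simp add: a_def b_def c_def)
qed

lemma id_posop: "posop (id::'a::complex_inner \<Rightarrow> 'a)"
  by (auto simp: posop_def sadj_def bounded_clinear_def Re_cinner_self id_def)

lemma cauchy_schwarz: "cmod (cinner (x::'a::complex_inner) y) \<le> norm x * norm y"
proof -
  have "(cmod (cinner x y))^2 \<le> (norm x)^2 * (norm y)^2"
    using pos_cs[OF id_posop, of x y] by (simp add: Re_cinner_self)
  then have "(cmod (cinner x y))^2 \<le> (norm x * norm y)^2" by (simp add: power_mult_distrib)
  then show ?thesis by (rule power2_le_imp_le) simp
qed

lemma norm_add_sq: "(norm (x + y::'a::complex_inner))^2 = (norm x)^2 + (norm y)^2 + 2 * Re (cinner x y)"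
proof -
  have "(norm (x+y))^2 = Re (cinner (x+y) (x+y))" by (simp add: Re_cinner_self)
  also have "\<dots> = Re (cinner x x) + Re (cinner y y) + Re (cinner x y) + Re (cinner y x)"
    by (simp add: cinner_add_left cinner_add_right)
  also have "Re (cinner y x) = Re (cinner x y)" using cinner_commute[of y x] by simp
  finally show ?thesis by (simp add: Re_cinner_self)
qed

lemma norm_diff_sq: "(norm (x - y::'a::complex_inner))^2 = (norm x)^2 + (norm y)^2 - 2 * Re (cinner x y)"
proof -
  have "(norm (x-y))^2 = Re (cinner (x-y) (x-y))" by (simp add: Re_cinner_self)
  also have "\<dots> = Re (cinner x x) + Re (cinner y y) - Re (cinner x y) - Re (cinner y x)"
    by (simp add: cinner_diff_left cinner_diff_right)
  also have "Re (cinner y x) = Re (cinner x y)" using cinner_commute[of y x] by simp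
  finally show ?thesis by (simp add: Re_cinner_self)
qed

lemma parallelogram: "(norm (x + y::'a::complex_inner))^2 + (norm (x - y))^2 = 2 * (norm x)^2 + 2 * (norm y)^2"
  by (simp add: norm_add_sq norm_diff_sq)

lemma riesz_aux_near:
  fixes \<phi> :: "'a::complex_inner \<Rightarrow> complex"
  assumes bl: "bounded_linear \<phi>" and cl: "\<And>c x. \<phi> (scaleC c x) = c * \<phi> x"
    and M: "onorm \<phi> > 0" and e: "0 < e"
  shows "\<exists>u. norm u = 1 \<and> \<phi> u = of_real (Re (\<phi> u)) \<and> Re (\<phi> u) > onorm \<phi> - e"
proof -
  define M where "M = onorm \<phi>"
  define e' where "e' = min e (M/2)"
  have e': "0 < e'" "e' \<le> e" "e' \<le> M / 2" using e M M_def by (auto simp: e'_def)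
  obtain x where x: "norm (\<phi> x) > (M - e') * norm x"
  proof (rule ccontr)
    assume "\<not> thesis"
    then have h: "\<And>x. norm (\<phi> x) \<le> (M - e') * norm x" using that by (meson not_le)
    have "onorm \<phi> \<le> M - e'" using e' M M_def by (intro onorm_bound h) auto
    then show False using e' M_def by simp
  qed
  have xnz: "x \<noteq> 0" using x bl by (auto simp: linear_simps)
  then have nx: "norm x > 0" by simp
  have fxnz: "\<phi> x \<noteq> 0"
  proof
    assume "\<phi> x = 0"
    then have "(M - e') * norm x < 0" using x by simp
    moreover have "(M - e') * norm x \<ge> 0" using e' M M_def nx by simp
    ultimately show False by simp
  qed
  define c where "c = cnj (\<phi> x) / of_real (cmod (\<phi> x) * norm x)"
  define u where "u = scaleC c x"
  have cm: "cmod c = 1 / norm x" using fxnz nx by (simp add: c_def norm_divide norm_mult)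
  have nu: "norm u = 1" using nx by (simp add: u_def norm_scaleC cm)
  have "\<phi> u = (cnj (\<phi> x) * \<phi> x) / of_real (cmod (\<phi> x) * norm x)"
    by (simp add: u_def cl c_def)
  also have "cnj (\<phi> x) * \<phi> x = of_real ((cmod (\<phi> x))^2)"
    using complex_norm_square[of "\<phi> x"] by (simp add: mult.commute)
  finally have "\<phi> u = of_real ((cmod (\<phi> x))^2 / (cmod (\<phi> x) * norm x))"
    by simp
  also have "(cmod (\<phi> x))^2 / (cmod (\<phi> x) * norm x) = cmod (\<phi> x) / norm x"
    using fxnz nx by (simp add: power2_eq_square)
  finally have pu: "\<phi> u = of_real (cmod (\<phi> x) / norm x)" .
  have "Re (\<phi> u) = cmod (\<phi> x) / norm x" using pu by simp
  also have "\<dots> > M - e'" using x nx by (simp add: field_simps)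
  finally show ?thesis using nu pu M_def e' by auto
qed

lemma riesz:
  fixes \<phi> :: "'a::chilbert_space \<Rightarrow> complex"
  assumes bl: "bounded_linear \<phi>" and cl: "\<And>c x. \<phi> (scaleC c x) = c * \<phi> x"
  shows "\<exists>y. \<forall>x. \<phi> x = cinner x y"
proof (cases "onorm \<phi> = 0")
  case True
  then show ?thesis using onorm_eq_0[OF bl] by (intro exI[of _ 0]) simp
next
  case False
  define M where "M = onorm \<phi>"
  have M: "M > 0" using False onorm_pos_le[OF bl] M_def by simp
  have "\<forall>n. \<exists>u. norm u = 1 \<and> \<phi> u = of_real (Re (\<phi> u)) \<and> Re (\<phi> u) > M - 1 / real (Suc n)"
    using riesz_aux_near[OF bl cl] M M_def by simp
  then obtain xs where xs: "\<And>n. norm (xs n) = 1" "\<And>n. \<phi> (xs n) = of_real (Re (\<phi> (xs n)))"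
    "\<And>n. Re (\<phi> (xs n)) > M - 1 / real (Suc n)"
    by metis
  have bound: "\<And>z. norm (\<phi> z) \<le> M * norm z" using onorm[OF bl] M_def by simp
  have dist_bound: "(norm (xs n - xs m))^2 \<le> 4 * ((1 / real (Suc n) + 1 / real (Suc m)) / M)" for n m
  proof -
    define \<eta> where "\<eta> = (1 / real (Suc n) + 1 / real (Suc m)) / M"
    have eta0: "\<eta> \<ge> 0" using M by (simp add: \<eta>_def)
    have par: "(norm (xs n - xs m))^2 = 4 - (norm (xs n + xs m))^2"
      using parallelogram[of "xs n" "xs m"] xs(1) by simp
    show ?thesis
    proof (cases "\<eta> \<ge> 2")
      case True
      have "(norm (xs n - xs m))^2 \<le> 4" using par by simp
      then show ?thesis using True unfolding \<eta>_def by linarith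
    next
      case False
      have "M * \<eta> = 1 / real (Suc n) + 1 / real (Suc m)" using M by (simp add: \<eta>_def)
      then have "2 * M - M * \<eta> < Re (\<phi> (xs n)) + Re (\<phi> (xs m))"
        using xs(3)[of n] xs(3)[of m] by linarith
      also have "\<dots> = Re (\<phi> (xs n + xs m))" using bl by (simp add: linear_simps)
      also have "\<dots> \<le> norm (\<phi> (xs n + xs m))" by (rule complex_Re_le_cmod)
      also have "\<dots> \<le> M * norm (xs n + xs m)" by (rule bound)
      finally have "M * (2 - \<eta>) < M * norm (xs n + xs m)" by (simp add: algebra_simps)
      then have h: "2 - \<eta> \<le> norm (xs n + xs m)" using M by simp
      have "(2 - \<eta>)^2 \<le> (norm (xs n + xs m))^2"
        using False by (intro power_mono h) simp
      then have "(norm (xs n - xs m))^2 \<le> 4 - (2 - \<eta>)^2" using par by simp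
      also have "\<dots> \<le> 4 * \<eta>" using eta0 by (simp add: power2_eq_square algebra_simps)
      finally show ?thesis by (simp add: \<eta>_def)
    qed
  qed
  have cauchy: "Cauchy xs"
  proof (rule metric_CauchyI)
    fix e :: real assume e: "e > 0"
    obtain N :: nat where N: "real N > 8 / (M * e^2)"
      using reals_Archimedean2 by blast
    show "\<exists>N. \<forall>m\<ge>N. \<forall>n\<ge>N. dist (xs m) (xs n) < e"
    proof (intro exI allI impI)
      fix m n assume mN: "m \<ge> N" and nN: "n \<ge> N"
      have pos: "0 < M * e^2" using M e by simp
      have "1 / real (Suc m) \<le> 1 / real (Suc N)" "1 / real (Suc n) \<le> 1 / real (Suc N)"
        using mN nN by (simp_all add: frac_le)
      then have "1 / real (Suc m) + 1 / real (Suc n) \<le> 1 / real (Suc N) + 1 / real (Suc N)"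
        by (rule add_mono)
      also have "\<dots> = 2 / real (Suc N)" by simp
      finally have "(1 / real (Suc m) + 1 / real (Suc n)) / M \<le> (2 / real (Suc N)) / M"
        using M by (intro divide_right_mono) auto
      also have "\<dots> < e^2 / 4"
      proof -
        have "8 / (M * e^2) < real (Suc N)" using N by simp
        then have h8: "8 < real (Suc N) * (M * e^2)" using pos by (simp add: field_simps)
        have p2: "0 < real (Suc N) * M" using M by simp
        have "2 / real (Suc N) / M = 2 / (real (Suc N) * M)" by simp
        also have "\<dots> < e^2 / 4"
        proof -
          have "e^2 / 4 * (real (Suc N) * M) = (real (Suc N) * (M * e^2)) / 4" by (simp add: ac_simps)
          then have "2 < e^2 / 4 * (real (Suc N) * M)" using h8 by linarith
          then show ?thesis unfolding pos_divide_less_eq[OF p2] .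
        qed
        finally show ?thesis .
      qed
      finally have "(norm (xs m - xs n))^2 < e^2"
        using dist_bound[of m n] by simp
      then show "dist (xs m) (xs n) < e" using e by (simp add: dist_norm power_less_imp_less_base)
    qed
  qed
  then obtain x0 where lim: "xs \<longlonglongrightarrow> x0" using convergent_eq_Cauchy by blast
  have nx0: "norm x0 = 1"
    using tendsto_norm[OF lim] xs(1) by (simp add: LIMSEQ_const_iff)
  have plim: "(\<lambda>n. Re (\<phi> (xs n))) \<longlonglongrightarrow> Re (\<phi> x0)"
    by (intro tendsto_intros bounded_linear.tendsto[OF bl lim])
  have "M \<le> Re (\<phi> x0)"
  proof (rule tendsto_le[OF _ plim])
    show "(\<lambda>n. M - 1 / real (Suc n)) \<longlonglongrightarrow> M"
      using tendsto_diff[OF tendsto_const[of M] LIMSEQ_inverse_real_of_nat] by (simp add: inverse_eq_divide)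
    show "\<forall>\<^sub>F n in sequentially. M - 1 / real (Suc n) \<le> Re (\<phi> (xs n))"
      using xs(3) by (simp add: less_imp_le)
  qed simp
  moreover have "cmod (\<phi> x0) \<le> M" using bound[of x0] nx0 by simp
  ultimately have r: "Re (\<phi> x0) = M" and c: "cmod (\<phi> x0) = M"
    using complex_Re_le_cmod[of "\<phi> x0"] by linarith+
  have "(Im (\<phi> x0))^2 = 0" using cmod_power2[of "\<phi> x0"] r c by simp
  then have phix0: "\<phi> x0 = of_real M" using r by (simp add: complex_eq_iff)
  have orth: "cinner k x0 = 0" if k: "\<phi> k = 0" for k
  proof -
    define b where "b = cinner k x0"
    have "(cmod b)^2 \<le> 0 * (norm k)^2"
    proof (rule quad_disc)
      show "0 \<le> (cmod b)^2" "0 \<le> (norm k)^2" by simp_all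
      fix s :: real
      define t where "t = - (of_real s * cnj b)"
      have "1 \<le> norm (x0 + scaleC t k)"
      proof -
        have "\<phi> (x0 + scaleC t k) = of_real M" using bl k phix0 by (simp add: linear_simps cl)
        then have "M \<le> M * norm (x0 + scaleC t k)" using bound[of "x0 + scaleC t k"] by simp
        then show ?thesis using M by simp
      qed
      then have "1 \<le> (norm (x0 + scaleC t k))^2" by (simp add: one_le_power)
      also have "\<dots> = 1 + (cmod t)^2 * (norm k)^2 + 2 * Re (cinner x0 (scaleC t k))"
        by (simp add: norm_add_sq norm_scaleC nx0 power_mult_distrib)
      also have "cinner x0 (scaleC t k) = cnj t * cnj b"
        using cinner_commute[of x0 k] by (simp add: cinner_scaleC_right b_def)
      also have "cnj t * cnj b = - of_real (s * (cmod b)^2)"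
      proof -
        have "cnj t * cnj b = - (of_real s * (b * cnj b))" by (simp add: t_def ac_simps)
        also have "b * cnj b = of_real ((cmod b)^2)" by (rule complex_norm_square[symmetric])
        finally show ?thesis by simp
      qed
      also have "(cmod t)^2 = s^2 * (cmod b)^2" by (simp add: t_def norm_mult power_mult_distrib)
      finally show "0 \<le> 0 - 2 * s * (cmod b)^2 + s^2 * (cmod b)^2 * (norm k)^2"
        by (simp add: algebra_simps)
    qed
    then show ?thesis by (simp add: b_def)
  qed
  show ?thesis
  proof (intro exI allI)
    fix x
    define k where "k = x - scaleC (\<phi> x / of_real M) x0"
    have "\<phi> k = 0" using bl M by (simp add: k_def linear_simps cl phix0)
    then have ck: "cinner k x0 = 0" by (rule orth)
    have "x = k + scaleC (\<phi> x / of_real M) x0" by (simp add: k_def)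
    then have "cinner x (scaleR M x0) = cinner (k + scaleC (\<phi> x / of_real M) x0) (scaleR M x0)" by simp
    also have "\<dots> = \<phi> x"
      using M by (simp add: cinner_add_left cinner_scaleC_left cinner_scaleR_right ck cinner_self_real nx0)
    finally show "\<phi> x = cinner x (scaleR M x0)" by simp
  qed
qed

lemma cinner_ext_right:
  assumes "\<And>x. cinner x u = cinner x (v::'a::complex_inner)" shows "u = v"
proof -
  have "cinner (u - v) (u - v) = 0" using assms[of "u - v"] by (simp add: cinner_diff_right)
  then have "(norm (u - v))^2 = 0" by (simp add: cinner_self_real)
  then show ?thesis by simp
qed

lemma cinner_ext_left:
  assumes "\<And>x. cinner u x = cinner (v::'a::complex_inner) x" shows "u = v"
  using assms cinner_ext_right[of u v] cinner_commute by (metis)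

lemma bclin_bound: "bounded_clinear A \<Longrightarrow> norm (A x) \<le> onorm A * norm x"
  by (rule onorm) (simp add: bounded_clinear_def)

lemma bclin_cinner_left_bl:
  assumes A: "bounded_clinear (A::'a::complex_inner \<Rightarrow> 'a)"
  shows "bounded_linear (\<lambda>x. cinner (A x) y)"
proof (rule bounded_linear_intro[where K = "onorm A * norm y"])
  fix x z show "cinner (A (x + z)) y = cinner (A x) y + cinner (A z) y"
    by (simp add: bclin_add[OF A] cinner_add_left)
next
  fix r x show "cinner (A (scaleR r x)) y = scaleR r (cinner (A x) y)"
    using A by (simp add: bounded_clinear_def linear_simps cinner_scaleR_left scaleR_conv_of_real)
next
  fix x
  have "cmod (cinner (A x) y) \<le> norm (A x) * norm y" by (rule cauchy_schwarz)
  also have "\<dots> \<le> onorm A * norm x * norm y"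
    by (intro mult_right_mono bclin_bound[OF A]) simp
  finally show "norm (cinner (A x) y) \<le> norm x * (onorm A * norm y)" by (simp add: ac_simps)
qed

lemma adj_ex:
  assumes A: "bounded_clinear (A::'a::chilbert_space \<Rightarrow> 'a)"
  shows "\<exists>S. \<forall>x y. cinner (A x) y = cinner x (S y)"
proof -
  have "\<forall>y. \<exists>v. \<forall>x. cinner (A x) y = cinner x v"
  proof
    fix y
    show "\<exists>v. \<forall>x. cinner (A x) y = cinner x v"
      by (rule riesz[OF bclin_cinner_left_bl[OF A]])
         (simp add: bclin_scaleC[OF A] cinner_scaleC_left)
  qed
  from choice[OF this] obtain S where "\<forall>y x. cinner (A x) y = cinner x (S y)" by blast
  then show ?thesis by blast
qed

lemma adj_prop:
  assumes A: "bounded_clinear (A::'a::chilbert_space \<Rightarrow> 'a)"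
  shows "cinner (A x) y = cinner x (adj A y)"
proof -
  have "\<exists>!S. \<forall>x y. cinner (A x) y = cinner x (S y)"
  proof (rule ex_ex1I)
    show "\<exists>S. \<forall>x y. cinner (A x) y = cinner x (S y)" by (rule adj_ex[OF A])
    fix S S' assume a: "\<forall>x y. cinner (A x) y = cinner x (S y)" and b: "\<forall>x y. cinner (A x) y = cinner x (S' y)"
    show "S = S'"
    proof (rule ext, rule cinner_ext_right)
      fix y x
      have "cinner x (S y) = cinner (A x) y" using a by simp
      also have "\<dots> = cinner x (S' y)" using b by simp
      finally show "cinner x (S y) = cinner x (S' y)" .
    qed
  qed
  then have "\<forall>x y. cinner (A x) y = cinner x (adj A y)"
    unfolding adj_def by (rule theI')
  then show ?thesis by blast
qed

lemma adj_prop2: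
  assumes A: "bounded_clinear (A::'a::chilbert_space \<Rightarrow> 'a)"
  shows "cinner (adj A y) x = cinner y (A x)"
  using adj_prop[OF A, of x y] cinner_commute[of "A x" y] cinner_commute[of x "adj A y"] by simp

lemma adj_bclin:
  assumes A: "bounded_clinear (A::'a::chilbert_space \<Rightarrow> 'a)"
  shows "bounded_clinear (adj A)"
proof -
  have add: "adj A (y + z) = adj A y + adj A z" for y z
    by (rule cinner_ext_right) (simp add: adj_prop[OF A, symmetric] cinner_add_right)
  have sc: "adj A (scaleC c y) = scaleC c (adj A y)" for c y
    by (rule cinner_ext_right) (simp add: adj_prop[OF A, symmetric] cinner_scaleC_right)
  have bnd: "norm (adj A y) \<le> norm y * onorm A" for y
  proof -
    have "(norm (adj A y))^2 = Re (cinner (adj A y) (adj A y))" by (simp add: Re_cinner_self)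
    also have "\<dots> = Re (cinner (A (adj A y)) y)" by (simp add: adj_prop[OF A])
    also have "\<dots> \<le> cmod (cinner (A (adj A y)) y)" by (rule complex_Re_le_cmod)
    also have "\<dots> \<le> norm (A (adj A y)) * norm y" by (rule cauchy_schwarz)
    also have "\<dots> \<le> onorm A * norm (adj A y) * norm y"
      by (intro mult_right_mono bclin_bound[OF A]) simp
    finally have h: "norm (adj A y) * norm (adj A y) \<le> norm (adj A y) * (norm y * onorm A)"
      by (simp add: power2_eq_square ac_simps)
    show ?thesis
    proof (cases "norm (adj A y) = 0")
      case True then show ?thesis using onorm_pos_le[of A] A by (simp add: bounded_clinear_def)
    next
      case False then show ?thesis using h by simp
    qed
  qed
  have "bounded_linear (adj A)"
    by (rule bounded_linear_intro[OF add _ bnd]) (simp add: sc scaleR_scaleC)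
  then show ?thesis using sc by (simp add: bounded_clinear_def)
qed

lemma adj_adj:
  assumes A: "bounded_clinear (A::'a::chilbert_space \<Rightarrow> 'a)"
  shows "adj (adj A) = A"
proof -
  have B: "bounded_clinear (adj A)" by (rule adj_bclin[OF A])
  show ?thesis
  proof (rule ext, rule cinner_ext_right)
    fix y x
    show "cinner x (adj (adj A) y) = cinner x (A y)"
      using adj_prop[OF B, of x y] adj_prop2[OF A, of x y] by simp
  qed
qed

lemma bclin_compose: "bounded_clinear f \<Longrightarrow> bounded_clinear g \<Longrightarrow> bounded_clinear (\<lambda>x. f (g x))"
  by (simp add: bounded_clinear_def bounded_linear_compose)

lemma AstarA_posop:
  assumes A: "bounded_clinear (A::'a::chilbert_space \<Rightarrow> 'a)"
  shows "posop (\<lambda>x. adj A (A x))"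
    and "cinner (adj A (A x)) y = cinner (A x) (A y)"
proof -
  show e: "cinner (adj A (A x)) y = cinner (A x) (A y)" for x y by (rule adj_prop2[OF A])
  have bc: "bounded_clinear (\<lambda>x. adj A (A x))" by (rule bclin_compose[OF adj_bclin[OF A] A])
  have sa: "cinner (adj A (A x)) y = cinner x (adj A (A y))" for x y
    by (simp add: e adj_prop[OF A, symmetric])
  show "posop (\<lambda>x. adj A (A x))"
  proof -
    have "0 \<le> Re (cinner (adj A (A x)) x)" for x by (simp add: e Re_cinner_self)
    then show ?thesis unfolding posop_def sadj_def using bc sa by blast
  qed
qed

lemma bclin_id: "bounded_clinear (\<lambda>x. x)"
  by (simp add: bounded_clinear_def)

lemma bclin_pow: "bounded_clinear P \<Longrightarrow> bounded_clinear (P ^^ i)"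
proof (induction i)
  case 0 then show ?case by (simp add: bclin_id id_def)
next
  case (Suc i)
  have "bounded_clinear (\<lambda>x. P ((P ^^ i) x))" by (rule bclin_compose[OF Suc.prems Suc.IH[OF Suc.prems]])
  then show ?case by (simp add: o_def)
qed

lemma bclin_scaleR_lin: "bounded_clinear T \<Longrightarrow> T (scaleR a x) = scaleR a (T x)"
  by (simp add: scaleR_scaleC bclin_scaleC)

lemma bclin_sum: "bounded_clinear T \<Longrightarrow> T (\<Sum>i\<in>I. f i) = (\<Sum>i\<in>I. T (f i))"
proof (induction I rule: infinite_finite_induct)
  case (infinite A) then show ?case by (simp add: bclin_zero)
next
  case empty then show ?case by (simp add: bclin_zero)
next
  case (insert x F) then show ?case by (simp add: bclin_add)
qed

lemma op_poly_upto:
  assumes "degree p \<le> n"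
  shows "op_poly p P x = (\<Sum>i\<le>n. coeff p i *\<^sub>R (P ^^ i) x)"
proof -
  have "(\<Sum>i\<le>n. coeff p i *\<^sub>R (P ^^ i) x) = (\<Sum>i\<le>degree p. coeff p i *\<^sub>R (P ^^ i) x)"
  proof (rule sum.mono_neutral_right)
    show "\<forall>i\<in>{..n} - {..degree p}. coeff p i *\<^sub>R (P ^^ i) x = 0"
      by (auto simp: coeff_eq_0)
  qed (use assms in auto)
  then show ?thesis by (simp add: op_poly_def)
qed

lemma op_poly_add: "op_poly (p + q) P x = op_poly p P x + op_poly q P x"
proof -
  define n where "n = max (degree p) (degree q)"
  have "op_poly (p + q) P x = (\<Sum>i\<le>n. coeff (p + q) i *\<^sub>R (P ^^ i) x)"
    by (rule op_poly_upto) (simp add: n_def degree_add_le)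
  also have "\<dots> = (\<Sum>i\<le>n. coeff p i *\<^sub>R (P ^^ i) x) + (\<Sum>i\<le>n. coeff q i *\<^sub>R (P ^^ i) x)"
    by (simp add: scaleR_add_left sum.distrib)
  also have "\<dots> = op_poly p P x + op_poly q P x"
  proof -
    have dp: "degree p \<le> n" and dq: "degree q \<le> n" by (simp_all add: n_def)
    show ?thesis using op_poly_upto[OF dp, of P x] op_poly_upto[OF dq, of P x] by simp
  qed
  finally show ?thesis .
qed

lemma op_poly_smult: "op_poly (smult a p) P x = a *\<^sub>R op_poly p P x"
proof -
  have "op_poly (smult a p) P x = (\<Sum>i\<le>degree p. coeff (smult a p) i *\<^sub>R (P ^^ i) x)"
    by (rule op_poly_upto) (simp add: degree_smult_le)
  also have "\<dots> = a *\<^sub>R op_poly p P x"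
    by (simp add: op_poly_def scaleR_sum_right)
  finally show ?thesis .
qed

lemma op_poly_0[simp]: "op_poly 0 P x = 0"
  by (simp add: op_poly_def)

lemma op_poly_const: "op_poly [:a:] P x = a *\<^sub>R x"
  by (simp add: op_poly_def)

lemma op_poly_pCons:
  assumes P: "bounded_clinear P"
  shows "op_poly (pCons a p) P x = a *\<^sub>R x + P (op_poly p P x)"
proof -
  define n where "n = degree p"
  have "op_poly (pCons a p) P x = (\<Sum>i\<le>Suc n. coeff (pCons a p) i *\<^sub>R (P ^^ i) x)"
    by (rule op_poly_upto) (simp add: n_def degree_pCons_le)
  also have "\<dots> = a *\<^sub>R x + (\<Sum>i\<le>n. coeff p i *\<^sub>R (P ^^ Suc i) x)"
    by (subst sum.atMost_Suc_shift) simp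
  also have "(\<Sum>i\<le>n. coeff p i *\<^sub>R (P ^^ Suc i) x) = P (op_poly p P x)"
    by (simp add: op_poly_def n_def bclin_sum[OF P] bclin_scaleR_lin[OF P])
  finally show ?thesis .
qed

lemma op_poly_mult:
  assumes P: "bounded_clinear P"
  shows "op_poly (p * q) P x = op_poly p P (op_poly q P x)"
proof (induction p arbitrary: x)
  case 0 then show ?case by simp
next
  case (pCons a p)
  have "pCons a p * q = smult a q + pCons 0 (p * q)" by simp
  then have "op_poly (pCons a p * q) P x = a *\<^sub>R op_poly q P x + P (op_poly (p * q) P x)"
    by (simp add: op_poly_add op_poly_smult op_poly_pCons[OF P])
  also have "\<dots> = op_poly (pCons a p) P (op_poly q P x)"
    by (simp add: op_poly_pCons[OF P] pCons.IH)
  finally show ?case .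
qed

lemma op_poly_X: "bounded_clinear P \<Longrightarrow> op_poly [:0, 1:] P x = P x"
  by (simp add: op_poly_pCons op_poly_const bclin_scaleR_lin bclin_zero)

lemma op_poly_comm:
  assumes P: "bounded_clinear P"
  shows "op_poly p P (P x) = P (op_poly p P x)"
proof -
  have "op_poly p P (P x) = op_poly (p * [:0,1:]) P x"
    using op_poly_mult[OF P, of p "[:0,1:]" x] op_poly_X[OF P, of x] by simp
  also have "p * [:0,1:] = [:0,1:] * p" by (rule mult.commute)
  also have "op_poly ([:0,1:] * p) P x = P (op_poly p P x)"
    using op_poly_mult[OF P, of "[:0,1:]" p x] op_poly_X[OF P, of "op_poly p P x"] by simp
  finally show ?thesis .
qed

lemma op_poly_bclin:
  assumes P: "bounded_clinear P"
  shows "bounded_clinear (op_poly p P)"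
proof (induction p)
  case 0
  have "op_poly 0 P = (\<lambda>x. 0)" by (simp add: fun_eq_iff)
  then show ?case by (simp add: bounded_clinear_def)
next
  case (pCons a p)
  have e: "op_poly (pCons a p) P = (\<lambda>x. a *\<^sub>R x + P (op_poly p P x))"
    by (simp add: fun_eq_iff op_poly_pCons[OF P])
  have bl1: "bounded_linear (\<lambda>x. a *\<^sub>R x)" by (rule bounded_linear_scaleR_right)
  have bl2: "bounded_linear (\<lambda>x. P (op_poly p P x))"
    by (rule bounded_linear_compose) (use P pCons.IH in \<open>simp_all add: bounded_clinear_def\<close>)
  have bl: "bounded_linear (op_poly (pCons a p) P)"
    unfolding e by (rule bounded_linear_add[OF bl1 bl2])
  show ?case unfolding bounded_clinear_def
  proof (intro conjI bl allI)
    fix c x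
    show "op_poly (pCons a p) P (scaleC c x) = scaleC c (op_poly (pCons a p) P x)"
      using pCons.IH P by (simp add: e bclin_scaleC scaleR_scaleC scaleC_scaleC scaleC_add_right mult.commute)
  qed
qed

lemma op_poly_sadj:
  assumes P: "bounded_clinear P" and sa: "sadj P"
  shows "sadj (op_poly p P)"
  unfolding sadj_def
proof (induction p)
  case 0 then show ?case by simp
next
  case (pCons a p)
  show ?case
  proof (intro allI)
    fix x y
    have "cinner (op_poly (pCons a p) P x) y = of_real a * cinner x y + cinner (op_poly p P x) (P y)"
      using sa by (simp add: op_poly_pCons[OF P] cinner_add_left cinner_scaleR_left sadj_def)
    also have "\<dots> = of_real a * cinner x y + cinner x (op_poly p P (P y))"
      using pCons.IH by simp
    also have "\<dots> = cinner x (op_poly (pCons a p) P y)"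
      by (simp add: op_poly_pCons[OF P] cinner_add_right cinner_scaleR_right op_poly_comm[OF P])
    finally show "cinner (op_poly (pCons a p) P x) y = cinner x (op_poly (pCons a p) P y)" .
  qed
qed

lemma poly_nonneg_right:
  fixes q :: "real poly"
  assumes "a < b" "\<And>t. a < t \<Longrightarrow> t < b \<Longrightarrow> 0 \<le> poly q t"
  shows "0 \<le> poly q a"
proof (rule tendsto_lowerbound)
  show "(poly q \<longlongrightarrow> poly q a) (at_right a)"
    by (intro tendsto_within_subset[OF isCont_def[THEN iffD1]]) auto
  show "\<forall>\<^sub>F t in at_right a. 0 \<le> poly q t"
    unfolding eventually_at_right_field using assms by blast
qed simp

lemma poly_nonneg_left:
  fixes q :: "real poly"
  assumes "b < a" "\<And>t. b < t \<Longrightarrow> t < a \<Longrightarrow> 0 \<le> poly q t"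
  shows "0 \<le> poly q a"
proof (rule tendsto_lowerbound)
  show "(poly q \<longlongrightarrow> poly q a) (at_left a)"
    by (intro tendsto_within_subset[OF isCont_def[THEN iffD1]]) auto
  show "\<forall>\<^sub>F t in at_left a. 0 \<le> poly q t"
    unfolding eventually_at_left_field using assms by blast
qed simp

section \<open>Positivity of polynomial calculus\<close>

definition pospoly :: "('a::complex_inner \<Rightarrow> 'a) \<Rightarrow> real poly \<Rightarrow> bool" where
  "pospoly P q \<longleftrightarrow> (\<forall>x. 0 \<le> Re (cinner (op_poly q P x) x))"

definition Wset :: "real \<Rightarrow> real poly set" where
  "Wset c = {1, [:0,1:], [:c,-1:], [:0,1:] * [:c,-1:]}"

definition Cp :: "('a::complex_inner \<Rightarrow> 'a) \<Rightarrow> real \<Rightarrow> real poly \<Rightarrow> bool" where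
  "Cp P c q \<longleftrightarrow> (\<forall>s w. w \<in> Wset c \<longrightarrow> pospoly P (s * s * w * q))"

lemma op_poly_1: "op_poly 1 P x = x"
  using op_poly_const[of 1 P x] by (simp add: one_pCons)

lemma posop_le_norm:
  assumes P: "posop P"
  shows "Re (cinner (P x) x) \<le> onorm P * (norm x)^2"
proof -
  have "Re (cinner (P x) x) \<le> cmod (cinner (P x) x)" by (rule complex_Re_le_cmod)
  also have "\<dots> \<le> norm (P x) * norm x" by (rule cauchy_schwarz)
  also have "\<dots> \<le> onorm P * norm x * norm x"
    using P by (intro mult_right_mono bclin_bound) (auto simp: posop_def)
  finally show ?thesis by (simp add: power2_eq_square ac_simps)
qed

lemma posop_sq_le:
  assumes P: "posop P"
  shows "(norm (P x))^2 \<le> onorm P * Re (cinner (P x) x)"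
proof -
  have bc: "bounded_clinear P" and sa: "sadj P" using P by (auto simp: posop_def)
  have cm: "cmod (cinner (P x) (P x)) = (norm (P x))^2" by (simp only: cinner_self_real norm_of_real) simp
  have A: "((norm (P x))^2)^2 \<le> Re (cinner (P x) x) * Re (cinner (P (P x)) (P x))"
    using pos_cs[OF P, of x "P x"] unfolding cm .
  have B: "Re (cinner (P (P x)) (P x)) \<le> onorm P * (norm (P x))^2" by (rule posop_le_norm[OF P])
  have R: "0 \<le> Re (cinner (P x) x)" using P by (simp add: posop_def)
  have h: "(norm (P x))^2 * (norm (P x))^2 \<le> (Re (cinner (P x) x) * onorm P) * (norm (P x))^2"
    using A mult_left_mono[OF B R] by (simp add: power2_eq_square[of "(norm (P x))^2"] ac_simps)
  show ?thesis
  proof (cases "norm (P x) = 0")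
    case True
    then show ?thesis using P onorm_pos_le[of P] by (simp add: posop_def bounded_clinear_def)
  next
    case False
    then have "(norm (P x))^2 > 0" by simp
    from mult_right_le_imp_le[OF h this] show ?thesis by (simp add: ac_simps)
  qed
qed

lemma pos_W:
  assumes P: "posop P" and c: "onorm P \<le> c" and w: "w \<in> Wset c"
  shows "pospoly P w"
proof -
  have bc: "bounded_clinear P" and sa: "sadj P" and pp: "\<And>x. 0 \<le> Re (cinner (P x) x)"
    using P by (auto simp: posop_def)
  have op0: "onorm P \<ge> 0" by (intro onorm_pos_le bounded_clinear_linear[OF bc])
  have cX: "op_poly [:c,-1:] P x = c *\<^sub>R x - P x" for x
    using bc by (simp add: op_poly_pCons op_poly_const bclin_scaleR_lin bclin_minus)
  have c1: "0 \<le> Re (cinner (op_poly [:c,-1:] P x) x)" for x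
  proof -
    have "Re (cinner (op_poly [:c,-1:] P x) x) = c * (norm x)^2 - Re (cinner (P x) x)"
      by (simp add: cX cinner_diff_left cinner_scaleR_left cinner_self_real)
    moreover have "Re (cinner (P x) x) \<le> c * (norm x)^2"
      using posop_le_norm[OF P, of x] c by (meson mult_right_mono order_trans zero_le_power2)
    ultimately show ?thesis by simp
  qed
  have c2: "0 \<le> Re (cinner (op_poly ([:0,1:] * [:c,-1:]) P x) x)" for x
  proof -
    have "op_poly ([:0,1:] * [:c,-1:]) P x = P (c *\<^sub>R x - P x)"
      by (simp only: op_poly_mult[OF bc] op_poly_X[OF bc] cX)
    also have "\<dots> = c *\<^sub>R P x - P (P x)" by (simp add: bclin_diff[OF bc] bclin_scaleR_lin[OF bc])
    finally have e: "op_poly ([:0,1:] * [:c,-1:]) P x = c *\<^sub>R P x - P (P x)" .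
    have e2: "cinner (P (P x)) x = cinner (P x) (P x)" using sa by (simp add: sadj_def)
    have "Re (cinner (op_poly ([:0,1:] * [:c,-1:]) P x) x) = c * Re (cinner (P x) x) - (norm (P x))^2"
      unfolding e by (simp add: cinner_diff_left cinner_scaleR_left e2 cinner_self_real)
    moreover have "(norm (P x))^2 \<le> c * Re (cinner (P x) x)"
      using posop_sq_le[OF P, of x] c pp[of x] by (meson mult_right_mono order_trans)
    ultimately show ?thesis by simp
  qed
  show ?thesis using w c1 c2 pp
    by (auto simp: Wset_def pospoly_def op_poly_1 op_poly_X[OF bc] Re_cinner_self)
qed

lemma pos_add: "pospoly P p \<Longrightarrow> pospoly P q \<Longrightarrow> pospoly P (p + q)"
  by (simp add: pospoly_def op_poly_add cinner_add_left)

lemma pos_smult: "pospoly P p \<Longrightarrow> 0 \<le> a \<Longrightarrow> pospoly P (smult a p)"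
  by (simp add: pospoly_def op_poly_smult cinner_scaleR_left)

lemma pos_sq:
  assumes P: "posop P" and q: "pospoly P q"
  shows "pospoly P (s * s * q)"
proof -
  have bc: "bounded_clinear P" and sa: "sadj P" using P by (auto simp: posop_def)
  have sas: "sadj (op_poly s P)" by (rule op_poly_sadj[OF bc sa])
  show ?thesis unfolding pospoly_def
  proof
    fix x
    have e: "s * s * q = s * (q * s)" by (simp only: mult_ac)
    have "op_poly (s * s * q) P x = op_poly (s * (q * s)) P x" by (simp only: e)
    also have "\<dots> = op_poly s P (op_poly q P (op_poly s P x))" by (simp only: op_poly_mult[OF bc])
    finally have "op_poly (s * s * q) P x = op_poly s P (op_poly q P (op_poly s P x))" .
    then have "cinner (op_poly (s * s * q) P x) x = cinner (op_poly q P (op_poly s P x)) (op_poly s P x)"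
      using sas by (simp add: sadj_def)
    then show "0 \<le> Re (cinner (op_poly (s * s * q) P x) x)"
      using q by (simp add: pospoly_def)
  qed
qed

lemma Cp_add: "Cp P c p \<Longrightarrow> Cp P c q \<Longrightarrow> Cp P c (p + q)"
  unfolding Cp_def by (simp add: distrib_left pos_add)

lemma Cp_smult: "Cp P c p \<Longrightarrow> 0 \<le> a \<Longrightarrow> Cp P c (smult a p)"
  unfolding Cp_def by (simp add: pos_smult mult_smult_right)

lemma Cp_const:
  assumes P: "posop P" and c: "onorm P \<le> c" and a: "0 \<le> a"
  shows "Cp P c [:a:]"
  unfolding Cp_def
proof (intro allI impI)
  fix s w assume w: "w \<in> Wset c"
  have "pospoly P (smult a (s * s * w))"
    by (intro pos_smult pos_sq[OF P] pos_W[OF P c w] a)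
  moreover have "s * s * w * [:a:] = smult a (s * s * w)" by simp
  ultimately show "pospoly P (s * s * w * [:a:])" by simp
qed

lemma Cp_sq: "Cp P c q \<Longrightarrow> Cp P c (r * r * q)"
  unfolding Cp_def
proof (intro allI impI)
  fix s w assume h: "\<forall>s w. w \<in> Wset c \<longrightarrow> pospoly P (s * s * w * q)" and w: "w \<in> Wset c"
  have e: "s * s * w * (r * r * q) = (s * r) * (s * r) * w * q" by (simp only: mult_ac)
  show "pospoly P (s * s * w * (r * r * q))" unfolding e using h w by blast
qed

lemma Cp_X:
  assumes "Cp P c q" shows "Cp P c ([:0,1:] * q)"
  unfolding Cp_def
proof (intro allI impI)
  fix s w assume w: "w \<in> Wset c"
  have h: "\<And>s w. w \<in> Wset c \<Longrightarrow> pospoly P (s * s * w * q)" using assms by (simp add: Cp_def)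
  define X :: "real poly" where "X = [:0,1:]"
  define Y :: "real poly" where "Y = [:c,-1:]"
  have W: "1 \<in> Wset c" "X \<in> Wset c" "Y \<in> Wset c" "X * Y \<in> Wset c"
    by (simp_all add: Wset_def X_def Y_def)
  have "w = 1 \<or> w = X \<or> w = Y \<or> w = X * Y" using w by (auto simp: Wset_def X_def Y_def)
  then have "pospoly P (s * s * w * (X * q))"
  proof (elim disjE)
    assume "w = 1"
    then have e: "s * s * w * (X * q) = s * s * X * q" by (simp only: mult_ac mult_1_left mult_1_right)
    show ?thesis unfolding e by (rule h[OF W(2)])
  next
    assume "w = X"
    then have e: "s * s * w * (X * q) = (s * X) * (s * X) * 1 * q" by (simp only: mult_ac mult_1_left mult_1_right)
    show ?thesis unfolding e by (rule h[OF W(1)])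
  next
    assume "w = Y"
    then have e: "s * s * w * (X * q) = s * s * (X * Y) * q" by (simp only: mult_ac)
    show ?thesis unfolding e by (rule h[OF W(4)])
  next
    assume "w = X * Y"
    then have e: "s * s * w * (X * q) = (s * X) * (s * X) * Y * q" by (simp only: mult_ac)
    show ?thesis unfolding e by (rule h[OF W(3)])
  qed
  then show "pospoly P (s * s * w * ([:0,1:] * q))" by (simp add: X_def)
qed

lemma Cp_cX:
  assumes "Cp P c q" shows "Cp P c ([:c,-1:] * q)"
  unfolding Cp_def
proof (intro allI impI)
  fix s w assume w: "w \<in> Wset c"
  have h: "\<And>s w. w \<in> Wset c \<Longrightarrow> pospoly P (s * s * w * q)" using assms by (simp add: Cp_def)
  define X :: "real poly" where "X = [:0,1:]"
  define Y :: "real poly" where "Y = [:c,-1:]"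
  have W: "1 \<in> Wset c" "X \<in> Wset c" "Y \<in> Wset c" "X * Y \<in> Wset c"
    by (simp_all add: Wset_def X_def Y_def)
  have "w = 1 \<or> w = X \<or> w = Y \<or> w = X * Y" using w by (auto simp: Wset_def X_def Y_def)
  then have "pospoly P (s * s * w * (Y * q))"
  proof (elim disjE)
    assume "w = 1"
    then have e: "s * s * w * (Y * q) = s * s * Y * q" by (simp only: mult_ac mult_1_left mult_1_right)
    show ?thesis unfolding e by (rule h[OF W(3)])
  next
    assume "w = X"
    then have e: "s * s * w * (Y * q) = s * s * (X * Y) * q" by (simp only: mult_ac)
    show ?thesis unfolding e by (rule h[OF W(4)])
  next
    assume "w = Y"
    then have e: "s * s * w * (Y * q) = (s * Y) * (s * Y) * 1 * q" by (simp only: mult_ac mult_1_left mult_1_right)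
    show ?thesis unfolding e by (rule h[OF W(1)])
  next
    assume "w = X * Y"
    then have e: "s * s * w * (Y * q) = (s * Y) * (s * Y) * X * q" by (simp only: mult_ac)
    show ?thesis unfolding e by (rule h[OF W(2)])
  qed
  then show "pospoly P (s * s * w * ([:c,-1:] * q))" by (simp add: Y_def)
qed

lemma Cp_all:
  assumes P: "posop P" and c: "onorm P \<le> c" and c0: "0 < c"
  shows "(\<forall>t\<in>{0..c}. 0 \<le> poly q t) \<Longrightarrow> Cp P c q"
proof (induction "degree q" arbitrary: q rule: less_induct)
  case (less q)
  have nn: "\<And>t. 0 \<le> t \<Longrightarrow> t \<le> c \<Longrightarrow> 0 \<le> poly q t" using less.prems by auto
  have cont: "continuous_on {0..c} (\<lambda>t. poly q t)"
    by (intro continuous_at_imp_continuous_on ballI) simp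
  obtain t0 where t0: "t0 \<in> {0..c}" and tmin: "\<forall>t\<in>{0..c}. poly q t0 \<le> poly q t"
    using continuous_attains_inf[OF compact_Icc _ cont] c0 by auto
  define m where "m = poly q t0"
  have m0: "0 \<le> m" using nn t0 by (simp add: m_def)
  define q' where "q' = q - [:m:]"
  have pq': "poly q' t = poly q t - m" for t by (simp add: q'_def)
  have q'nn: "\<And>t. 0 \<le> t \<Longrightarrow> t \<le> c \<Longrightarrow> 0 \<le> poly q' t" using tmin by (simp add: pq' m_def)
  have q't0: "poly q' t0 = 0" by (simp add: pq' m_def)
  have dq': "degree q' \<le> degree q"
    unfolding q'_def by (rule degree_diff_le) simp_all
  have qeq: "q = q' + [:m:]" by (simp add: q'_def)
  have Cm: "Cp P c [:m:]" by (rule Cp_const[OF P c m0])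
  have "Cp P c q'"
  proof (cases "q' = 0")
    case True
    then show ?thesis using Cp_const[OF P c, of 0] by simp
  next
    case False
    obtain q1 where q1: "q' = [:-t0,1:] * q1"
      using q't0 by (auto simp: poly_eq_0_iff_dvd dvd_def)
    have q1nz: "q1 \<noteq> 0" using False q1 by auto
    have "degree q' = Suc (degree q1)"
      unfolding q1 by (subst degree_mult_eq) (use q1nz in auto)
    then have dq1: "degree q1 < degree q" using dq' by simp
    have pq1: "poly q' t = (t - t0) * poly q1 t" for t by (simp add: q1 algebra_simps)
    consider "t0 = 0" | "t0 = c" | "0 < t0 \<and> t0 < c" using t0 by fastforce
    then show ?thesis
    proof cases
      case 1
      have q1nn: "0 \<le> poly q1 t" if "0 \<le> t" "t \<le> c" for t
      proof (cases "t = 0")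
        case True
        show ?thesis unfolding True
        proof (rule poly_nonneg_right[OF c0])
          fix t assume "0 < t" "t < c"
          then show "0 \<le> poly q1 t" using q'nn[of t] pq1[of t] 1 by (simp add: zero_le_mult_iff)
        qed
      next
        case False
        then show ?thesis using that q'nn[of t] pq1[of t] 1 by (simp add: zero_le_mult_iff)
      qed
      have "Cp P c q1" using less.hyps[OF dq1] q1nn by auto
      then have "Cp P c ([:0,1:] * q1)" by (rule Cp_X)
      then show ?thesis using q1 1 by simp
    next
      case 2
      have q1nn: "0 \<le> poly (- q1) t" if "0 \<le> t" "t \<le> c" for t
      proof (cases "t = c")
        case True
        show ?thesis unfolding True
        proof (rule poly_nonneg_left[OF c0])
          fix t assume "0 < t" "t < c"
          then show "0 \<le> poly (- q1) t" using q'nn[of t] pq1[of t] 2 by (simp add: zero_le_mult_iff)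
        qed
      next
        case False
        then show ?thesis using that q'nn[of t] pq1[of t] 2 by (simp add: zero_le_mult_iff)
      qed
      have "degree (- q1) < degree q" using dq1 by simp
      then have "Cp P c (- q1)" using less.hyps q1nn by auto
      then have "Cp P c ([:c,-1:] * (- q1))" by (rule Cp_cX)
      moreover have "[:c,-1:] * (- q1) = q'" using q1 2 by simp
      ultimately show ?thesis by simp
    next
      case 3
      have r: "0 \<le> poly q1 t0"
      proof (rule poly_nonneg_right[of t0 c])
        show "t0 < c" using 3 by simp
        fix t assume "t0 < t" "t < c"
        then show "0 \<le> poly q1 t" using q'nn[of t] pq1[of t] 3 by (simp add: zero_le_mult_iff)
      qed
      have l: "0 \<le> poly (- q1) t0"
      proof (rule poly_nonneg_left[of 0 t0])
        show "0 < t0" using 3 by simp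
        fix t assume "0 < t" "t < t0"
        then show "0 \<le> poly (- q1) t" using q'nn[of t] pq1[of t] 3 by (simp add: zero_le_mult_iff)
      qed
      have "poly q1 t0 = 0" using r l by simp
      then obtain q2 where q2: "q1 = [:-t0,1:] * q2"
        by (auto simp: poly_eq_0_iff_dvd dvd_def)
      have q2nz: "q2 \<noteq> 0" using q1nz q2 by auto
      have "degree q1 = Suc (degree q2)"
        unfolding q2 by (subst degree_mult_eq) (use q2nz in auto)
      then have dq2: "degree q2 < degree q" using dq1 by simp
      have pq2: "poly q' t = (t - t0) * (t - t0) * poly q2 t" for t by (simp add: pq1 q2 algebra_simps)
      have q2nn: "0 \<le> poly q2 t" if "0 \<le> t" "t \<le> c" for t
      proof (cases "t = t0")
        case True
        show ?thesis unfolding True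
        proof (rule poly_nonneg_right[of t0 c])
          show "t0 < c" using 3 by simp
          fix t assume "t0 < t" "t < c"
          moreover have "(t - t0) * (t - t0) > 0" using \<open>t0 < t\<close> by simp
          moreover have "0 \<le> (t - t0) * (t - t0) * poly q2 t" using q'nn[of t] pq2[of t] 3 \<open>t0 < t\<close> \<open>t < c\<close> by simp
          ultimately show "0 \<le> poly q2 t" by (meson mult_pos_neg not_le)
        qed
      next
        case False
        then have pos: "(t - t0) * (t - t0) > 0" by (cases "t < t0") (auto simp: zero_less_mult_iff)
        have "0 \<le> (t - t0) * (t - t0) * poly q2 t" using that q'nn[of t] pq2[of t] by simp
        then show ?thesis using pos by (meson mult_pos_neg not_le)
      qed
      have "Cp P c q2" using less.hyps[OF dq2] q2nn by auto
      then have C: "Cp P c ([:-t0,1:] * [:-t0,1:] * q2)" by (rule Cp_sq)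
      have "q' = [:-t0,1:] * [:-t0,1:] * q2" using q1 q2 by (simp only: mult.assoc)
      then show ?thesis using C by (simp only:)
    qed
  qed
  then have "Cp P c (q' + [:m:])" by (rule Cp_add[OF _ Cm])
  then show ?case using qeq by simp
qed

lemma pospoly_of_nonneg:
  assumes P: "posop P" and c: "onorm P \<le> c" and c0: "0 < c"
    and nn: "\<forall>t\<in>{0..c}. 0 \<le> poly q t"
  shows "pospoly P q"
proof -
  have "Cp P c q" by (rule Cp_all[OF P c c0 nn])
  moreover have "1 \<in> Wset c" by (simp add: Wset_def)
  ultimately have "pospoly P (1 * 1 * 1 * q)" unfolding Cp_def by blast
  then show ?thesis by simp
qed

lemma op_poly_zero_op:
  assumes P: "bounded_clinear P" and z: "\<And>x. P x = 0"
  shows "op_poly p P x = poly p 0 *\<^sub>R x"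
proof (induction p)
  case 0 then show ?case by simp
next
  case (pCons a p)
  have "op_poly (pCons a p) P x = a *\<^sub>R x + P (op_poly p P x)" by (rule op_poly_pCons[OF P])
  then show ?case using z[of "op_poly p P x"] by simp
qed

lemma op_poly_norm_bound:
  assumes P: "posop P" and M: "\<forall>t\<in>{0..onorm P}. \<bar>poly p t\<bar> \<le> M"
  shows "norm (op_poly p P x) \<le> M * norm x"
proof -
  have bc: "bounded_clinear P" and sa: "sadj P" using P by (auto simp: posop_def)
  have op0: "onorm P \<ge> 0" by (intro onorm_pos_le bounded_clinear_linear[OF bc])
  have "\<bar>poly p 0\<bar> \<le> M" using M op0 by auto
  then have M0: "0 \<le> M" by linarith
  show ?thesis
  proof (cases "onorm P = 0")
    case True
    then have z: "\<And>x. P x = 0" using onorm_eq_0[OF bounded_clinear_linear[OF bc]] by simp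
    have "norm (op_poly p P x) = \<bar>poly p 0\<bar> * norm x" by (simp add: op_poly_zero_op[OF bc z])
    also have "\<dots> \<le> M * norm x" using M True by (intro mult_right_mono) auto
    finally show ?thesis .
  next
    case False
    then have c0: "0 < onorm P" using op0 by simp
    define q where "q = smult (M^2) 1 + smult (-1) (p * p)"
    have qnn: "\<forall>t\<in>{0..onorm P}. 0 \<le> poly q t"
    proof
      fix t assume t: "t \<in> {0..onorm P}"
      have "\<bar>poly p t\<bar>^2 \<le> M^2" using M t by (intro power_mono) auto
      then have "(poly p t)^2 \<le> M^2" by simp
      then show "0 \<le> poly q t" by (simp add: q_def power2_eq_square)
    qed
    have "pospoly P q" by (rule pospoly_of_nonneg[OF P order_refl c0 qnn])
    then have h: "0 \<le> Re (cinner (op_poly q P x) x)" by (simp add: pospoly_def)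
    have "op_poly q P x = M^2 *\<^sub>R op_poly 1 P x + (-1) *\<^sub>R op_poly (p * p) P x"
      unfolding q_def by (simp only: op_poly_add op_poly_smult)
    also have "\<dots> = M^2 *\<^sub>R x - op_poly p P (op_poly p P x)"
      by (simp add: op_poly_1 op_poly_mult[OF bc])
    finally have "op_poly q P x = M^2 *\<^sub>R x - op_poly p P (op_poly p P x)" .
    moreover have "cinner (op_poly p P (op_poly p P x)) x = cinner (op_poly p P x) (op_poly p P x)"
      using op_poly_sadj[OF bc sa, of p] unfolding sadj_def by simp
    ultimately have "Re (cinner (op_poly q P x) x) = M^2 * (norm x)^2 - (norm (op_poly p P x))^2"
      by (simp add: cinner_diff_left cinner_scaleR_left Re_cinner_self)
    then have "(norm (op_poly p P x))^2 \<le> (M * norm x)^2" using h by (simp add: power_mult_distrib)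
    then show ?thesis by (rule power2_le_imp_le) (simp add: M0)
  qed
qed

section \<open>Polynomial approximation\<close>

lemma approx_poly:
  fixes f :: "real \<Rightarrow> real"
  assumes S: "compact S" and f: "continuous_on S f" and e: "0 < e"
  shows "\<exists>p::real poly. \<forall>t\<in>S. \<bar>f t - poly p t\<bar> < e"
proof -
  obtain g where g: "real_polynomial_function g" "\<And>x. x \<in> S \<Longrightarrow> \<bar>f x - g x\<bar> < e"
    using Stone_Weierstrass_real_polynomial_function[OF S f e] by blast
  obtain a n where gs: "g = (\<lambda>x. \<Sum>i\<le>n. a i * x^i)"
    using g(1) real_polynomial_function_iff_sum by blast
  define p where "p = (\<Sum>i\<le>n. monom (a i) i)"
  have "poly p x = g x" for x by (simp add: p_def gs poly_sum poly_monom)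
  then have "\<forall>t\<in>S. \<bar>f t - poly p t\<bar> < e" using g(2) by simp
  then show ?thesis by blast
qed

lemma weier_seq:
  fixes f :: "real \<Rightarrow> real"
  assumes f: "continuous_on {a..b} f"
  shows "\<exists>p::nat \<Rightarrow> real poly. \<forall>n. \<forall>t\<in>{a..b}. \<bar>f t - poly (p n) t\<bar> < 1 / real (Suc n)"
proof -
  have "\<forall>n. \<exists>q::real poly. \<forall>t\<in>{a..b}. \<bar>f t - poly q t\<bar> < 1 / real (Suc n)"
    using approx_poly[OF compact_Icc f] by simp
  then show ?thesis by (rule choice)
qed

lemma weier_seq_unif:
  assumes "\<forall>n. \<forall>t\<in>S. \<bar>f t - poly (p n) t\<bar> < 1 / real (Suc n)"
  shows "uniform_limit S (\<lambda>n t. poly (p n) t) f sequentially"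
proof (rule uniform_limitI)
  fix e :: real assume e: "0 < e"
  obtain N :: nat where N: "1 / real (Suc N) < e" using e by (metis nat_approx_posE)
  show "\<forall>\<^sub>F n in sequentially. \<forall>t\<in>S. dist (poly (p n) t) (f t) < e"
  proof (rule eventually_sequentiallyI[of N])
    fix n assume n: "N \<le> n"
    have "1 / real (Suc n) \<le> 1 / real (Suc N)" using n by (simp add: frac_le)
    show "\<forall>t\<in>S. dist (poly (p n) t) (f t) < e"
    proof
      fix t assume t: "t \<in> S"
      have "\<bar>f t - poly (p n) t\<bar> < 1 / real (Suc n)" using assms t by blast
      then show "dist (poly (p n) t) (f t) < e"
        using \<open>1 / real (Suc n) \<le> 1 / real (Suc N)\<close> N by (simp add: dist_real_def abs_minus_commute)
    qed
  qed
qed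

section \<open>Operators from polynomials\<close>

lemma op_poly_diff: "op_poly (p - q) P x = op_poly p P x - op_poly q P x"
proof -
  have "p - q = p + smult (-1) q" by simp
  then show ?thesis by (simp only: op_poly_add op_poly_smult) simp
qed

lemma op_poly_close:
  assumes P: "posop P" and d: "\<forall>t\<in>{0..onorm P}. \<bar>poly p t - poly q t\<bar> \<le> \<delta>"
  shows "norm (op_poly p P x - op_poly q P x) \<le> \<delta> * norm x"
  using op_poly_norm_bound[OF P, of "p - q" \<delta> x] d by (simp add: op_poly_diff)

lemma bl_scaleC: "bounded_linear (\<lambda>u::'a::complex_inner. scaleC c u)"
proof (rule bounded_linear_intro[where K = "cmod c"])
  show "scaleC c (x + y) = scaleC c x + scaleC c y" for x y :: 'a by (rule scaleC_add_right)
  show "scaleC c (r *\<^sub>R x) = r *\<^sub>R scaleC c x" for r and x :: 'a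
    by (simp add: scaleR_scaleC scaleC_scaleC mult.commute)
  show "norm (scaleC c x) \<le> norm x * cmod c" for x :: 'a by (simp add: norm_scaleC mult.commute)
qed

definition fprop :: "(real \<Rightarrow> real) \<Rightarrow> ('a::complex_inner \<Rightarrow> 'a) \<Rightarrow> ('a \<Rightarrow> 'a) \<Rightarrow> bool" where
  "fprop f P T \<longleftrightarrow> bounded_clinear T \<and>
     (\<forall>p :: nat \<Rightarrow> real poly. uniform_limit {0..onorm P} (\<lambda>n t. poly (p n) t) f sequentially
        \<longrightarrow> (\<lambda>n. onorm (\<lambda>x. op_poly (p n) P x - T x)) \<longlonglongrightarrow> 0)"

lemma fcalc_eq_THE: "fcalc f P = (THE T. fprop f P T)"
  by (simp add: fcalc_def fprop_def)

lemma onorm_to_pointwise: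
  assumes P: "bounded_clinear P" and T: "bounded_clinear T"
    and lim: "(\<lambda>n. onorm (\<lambda>x. op_poly (p n) P x - T x)) \<longlonglongrightarrow> 0"
  shows "(\<lambda>n. op_poly (p n) P x) \<longlonglongrightarrow> T x"
proof -
  have bl: "bounded_linear (\<lambda>x. op_poly (p n) P x - T x)" for n
    by (intro bounded_linear_sub bounded_clinear_linear op_poly_bclin P T)
  have "(\<lambda>n. op_poly (p n) P x - T x) \<longlonglongrightarrow> 0"
  proof (rule Lim_null_comparison)
    show "\<forall>\<^sub>F n in sequentially. norm (op_poly (p n) P x - T x) \<le> onorm (\<lambda>x. op_poly (p n) P x - T x) * norm x"
      using onorm[OF bl] by simp
    show "(\<lambda>n. onorm (\<lambda>x. op_poly (p n) P x - T x) * norm x) \<longlonglongrightarrow> 0"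
      by (rule tendsto_mult_left_zero[OF lim])
  qed
  then have "(\<lambda>n. (op_poly (p n) P x - T x) + T x) \<longlonglongrightarrow> 0 + T x"
    by (intro tendsto_add tendsto_const)
  then show ?thesis by simp
qed

lemma fcalc_exists:
  fixes P :: "'a::chilbert_space \<Rightarrow> 'a"
  assumes P: "posop P" and f: "continuous_on {0..onorm P} f"
  shows "\<exists>T. fprop f P T"
proof -
  have bc: "bounded_clinear P" using P by (simp add: posop_def)
  define c where "c = onorm P"
  obtain p where p: "\<forall>n. \<forall>t\<in>{0..c}. \<bar>f t - poly (p n) t\<bar> < 1 / real (Suc n)"
    using weier_seq[OF f] c_def by blast
  have close: "norm (op_poly (p n) P x - op_poly (p m) P x) \<le> (1 / real (Suc n) + 1 / real (Suc m)) * norm x" for n m x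
  proof (rule op_poly_close[OF P])
    show "\<forall>t\<in>{0..onorm P}. \<bar>poly (p n) t - poly (p m) t\<bar> \<le> 1 / real (Suc n) + 1 / real (Suc m)"
    proof
      fix t assume t: "t \<in> {0..onorm P}"
      have "\<bar>f t - poly (p n) t\<bar> < 1 / real (Suc n)" "\<bar>f t - poly (p m) t\<bar> < 1 / real (Suc m)"
        using p t c_def by auto
      then show "\<bar>poly (p n) t - poly (p m) t\<bar> \<le> 1 / real (Suc n) + 1 / real (Suc m)" by linarith
    qed
  qed
  have cauchy: "Cauchy (\<lambda>n. op_poly (p n) P x)" for x
  proof (rule metric_CauchyI)
    fix e :: real assume e: "0 < e"
    have nx1: "0 < norm x + 1" using norm_ge_zero[of x] by linarith
    have e2: "0 < e / (2 * (norm x + 1))" using e nx1 by (intro divide_pos_pos) simp_all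
    obtain N :: nat where N: "1 / real (Suc N) < e / (2 * (norm x + 1))"
      using e2 by (metis nat_approx_posE)
    show "\<exists>N. \<forall>m\<ge>N. \<forall>n\<ge>N. dist (op_poly (p m) P x) (op_poly (p n) P x) < e"
    proof (intro exI allI impI)
      fix m n assume m: "N \<le> m" and n: "N \<le> n"
      have a: "1 / real (Suc m) \<le> 1 / real (Suc N)" "1 / real (Suc n) \<le> 1 / real (Suc N)"
        using m n by (simp_all add: frac_le)
      have "dist (op_poly (p m) P x) (op_poly (p n) P x) \<le> (1 / real (Suc m) + 1 / real (Suc n)) * norm x"
        using close[where n=m and m=n and x=x] by (simp add: dist_norm)
      also have "\<dots> \<le> (2 / real (Suc N)) * norm x"
        using a by (intro mult_right_mono) auto
      also have "\<dots> \<le> (2 / real (Suc N)) * (norm x + 1)"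
        by (intro mult_left_mono) auto
      also have "\<dots> < (2 * (e / (2 * (norm x + 1)))) * (norm x + 1)"
        using N nx1 by (intro mult_strict_right_mono) auto
      also have "\<dots> = e" using nx1 by (simp add: field_simps)
      finally show "dist (op_poly (p m) P x) (op_poly (p n) P x) < e" .
    qed
  qed
  define T where "T x = lim (\<lambda>n. op_poly (p n) P x)" for x
  have lim: "(\<lambda>n. op_poly (p n) P x) \<longlonglongrightarrow> T x" for x
    using cauchy[of x] by (simp add: T_def Cauchy_convergent_iff convergent_LIMSEQ_iff)
  have AL: "norm (op_poly q P x - T x) \<le> \<delta> * norm x"
    if q: "\<forall>t\<in>{0..c}. \<bar>poly q t - f t\<bar> \<le> \<delta>" for q \<delta> x
  proof -
    have b: "norm (op_poly q P x - op_poly (p n) P x) \<le> (\<delta> + 1 / real (Suc n)) * norm x" for n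
    proof (rule op_poly_close[OF P])
      show "\<forall>t\<in>{0..onorm P}. \<bar>poly q t - poly (p n) t\<bar> \<le> \<delta> + 1 / real (Suc n)"
      proof
        fix t assume t: "t \<in> {0..onorm P}"
        have "\<bar>f t - poly (p n) t\<bar> < 1 / real (Suc n)" "\<bar>poly q t - f t\<bar> \<le> \<delta>"
          using p q t c_def by auto
        then show "\<bar>poly q t - poly (p n) t\<bar> \<le> \<delta> + 1 / real (Suc n)" by linarith
      qed
    qed
    have l1: "(\<lambda>n. norm (op_poly q P x - op_poly (p n) P x)) \<longlonglongrightarrow> norm (op_poly q P x - T x)"
      by (intro tendsto_norm tendsto_diff tendsto_const lim)
    have l2: "(\<lambda>n. (\<delta> + 1 / real (Suc n)) * norm x) \<longlonglongrightarrow> (\<delta> + 0) * norm x"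
      by (intro tendsto_mult tendsto_add tendsto_const LIMSEQ_Suc[OF lim_const_over_n])
    show ?thesis using tendsto_le[OF _ l2 l1] b by simp
  qed
  have Tadd: "T (x + y) = T x + T y" for x y
  proof -
    have "(\<lambda>n. op_poly (p n) P (x + y)) \<longlonglongrightarrow> T x + T y"
      using tendsto_add[OF lim[of x] lim[of y]] by (simp add: bclin_add[OF op_poly_bclin[OF bc]])
    then show ?thesis using lim[of "x + y"] LIMSEQ_unique by blast
  qed
  have TscC: "T (scaleC a x) = scaleC a (T x)" for a x
  proof -
    have "(\<lambda>n. scaleC a (op_poly (p n) P x)) \<longlonglongrightarrow> scaleC a (T x)"
      by (rule bounded_linear.tendsto[OF bl_scaleC lim])
    then have "(\<lambda>n. op_poly (p n) P (scaleC a x)) \<longlonglongrightarrow> scaleC a (T x)"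
      by (simp add: bclin_scaleC[OF op_poly_bclin[OF bc]])
    then show ?thesis using lim[of "scaleC a x"] LIMSEQ_unique by blast
  qed
  have p0: "\<forall>t\<in>{0..c}. \<bar>poly (p 0) t - f t\<bar> \<le> 1"
  proof
    fix t assume "t \<in> {0..c}"
    then have "\<bar>f t - poly (p 0) t\<bar> < 1 / real (Suc 0)" using p by blast
    then show "\<bar>poly (p 0) t - f t\<bar> \<le> 1" by (simp add: abs_minus_commute)
  qed
  have Tbnd: "norm (T x) \<le> norm x * (onorm (op_poly (p 0) P) + 1)" for x
  proof -
    have "norm (T x) \<le> norm (op_poly (p 0) P x) + norm (op_poly (p 0) P x - T x)"
      by (metis add_diff_cancel_left' diff_add_cancel norm_triangle_ineq4 add.commute norm_minus_commute)
    also have "\<dots> \<le> onorm (op_poly (p 0) P) * norm x + 1 * norm x"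
      by (intro add_mono onorm AL[OF p0] bounded_clinear_linear op_poly_bclin bc)
    finally show ?thesis by (simp add: algebra_simps)
  qed
  have Tbl: "bounded_linear T"
    by (rule bounded_linear_intro[OF Tadd _ Tbnd]) (simp add: scaleR_scaleC TscC)
  have Tbc: "bounded_clinear T" using Tbl TscC by (simp add: bounded_clinear_def)
  have "fprop f P T"
    unfolding fprop_def
  proof (intro conjI Tbc allI impI)
    fix q :: "nat \<Rightarrow> real poly"
    assume u: "uniform_limit {0..onorm P} (\<lambda>n t. poly (q n) t) f sequentially"
    show "(\<lambda>n. onorm (\<lambda>x. op_poly (q n) P x - T x)) \<longlonglongrightarrow> 0"
    proof (rule LIMSEQ_I)
      fix e :: real assume e: "0 < e"
      have "\<forall>\<^sub>F n in sequentially. \<forall>t\<in>{0..onorm P}. dist (poly (q n) t) (f t) < e / 2"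
        using uniform_limitD[OF u, of "e/2"] e by simp
      then obtain N where N: "\<And>n. N \<le> n \<Longrightarrow> \<forall>t\<in>{0..onorm P}. dist (poly (q n) t) (f t) < e / 2"
        by (auto simp: eventually_sequentially)
      show "\<exists>N. \<forall>n\<ge>N. norm (onorm (\<lambda>x. op_poly (q n) P x - T x) - 0) < e"
      proof (intro exI allI impI)
        fix n assume n: "N \<le> n"
        have qn: "\<forall>t\<in>{0..c}. \<bar>poly (q n) t - f t\<bar> \<le> e / 2"
          using N[OF n] c_def by (auto simp: dist_real_def less_imp_le)
        have bl: "bounded_linear (\<lambda>x. op_poly (q n) P x - T x)"
          by (intro bounded_linear_sub bounded_clinear_linear op_poly_bclin bc Tbc)
        have "onorm (\<lambda>x. op_poly (q n) P x - T x) \<le> e / 2"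
          using e by (intro onorm_bound AL[OF qn]) simp
        moreover have "0 \<le> onorm (\<lambda>x. op_poly (q n) P x - T x)" by (rule onorm_pos_le[OF bl])
        ultimately show "norm (onorm (\<lambda>x. op_poly (q n) P x - T x) - 0) < e" using e by simp
      qed
    qed
  qed
  then show ?thesis by blast
qed

lemma fprop_unique:
  fixes P :: "'a::chilbert_space \<Rightarrow> 'a"
  assumes P: "posop P" and f: "continuous_on {0..onorm P} f"
    and T: "fprop f P T" and T': "fprop f P T'"
  shows "T = T'"
proof
  fix x
  have bc: "bounded_clinear P" using P by (simp add: posop_def)
  obtain p where p: "\<forall>n. \<forall>t\<in>{0..onorm P}. \<bar>f t - poly (p n) t\<bar> < 1 / real (Suc n)"
    using weier_seq[OF f] by blast
  have u: "uniform_limit {0..onorm P} (\<lambda>n t. poly (p n) t) f sequentially"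
    by (rule weier_seq_unif[OF p])
  have "(\<lambda>n. op_poly (p n) P x) \<longlonglongrightarrow> T x"
    using T u by (intro onorm_to_pointwise[OF bc]) (auto simp: fprop_def)
  moreover have "(\<lambda>n. op_poly (p n) P x) \<longlonglongrightarrow> T' x"
    using T' u by (intro onorm_to_pointwise[OF bc]) (auto simp: fprop_def)
  ultimately show "T x = T' x" by (rule LIMSEQ_unique)
qed

lemma fcalc_fprop:
  fixes P :: "'a::chilbert_space \<Rightarrow> 'a"
  assumes P: "posop P" and f: "continuous_on {0..onorm P} f"
  shows "fprop f P (fcalc f P)"
proof -
  have "\<exists>!T. fprop f P T"
    using fcalc_exists[OF P f] fprop_unique[OF P f] by blast
  then show ?thesis unfolding fcalc_eq_THE by (rule theI')
qed

lemma fcalc_bclin: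
  fixes P :: "'a::chilbert_space \<Rightarrow> 'a"
  assumes P: "posop P" and f: "continuous_on {0..onorm P} f"
  shows "bounded_clinear (fcalc f P)"
  using fcalc_fprop[OF P f] by (simp add: fprop_def)

lemma fcalc_lim:
  fixes P :: "'a::chilbert_space \<Rightarrow> 'a"
  assumes P: "posop P" and f: "continuous_on {0..onorm P} f"
    and u: "uniform_limit {0..onorm P} (\<lambda>n t. poly (p n) t) f sequentially"
  shows "(\<lambda>n. op_poly (p n) P x) \<longlonglongrightarrow> fcalc f P x"
  using fcalc_fprop[OF P f] u P
  by (intro onorm_to_pointwise) (auto simp: fprop_def posop_def)

lemma fcalc_approx:
  fixes P :: "'a::chilbert_space \<Rightarrow> 'a"
  assumes P: "posop P" and f: "continuous_on {0..onorm P} f"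
    and q: "\<forall>t\<in>{0..onorm P}. \<bar>poly q t - f t\<bar> \<le> \<delta>"
  shows "norm (op_poly q P x - fcalc f P x) \<le> \<delta> * norm x"
proof -
  obtain p where p: "\<forall>n. \<forall>t\<in>{0..onorm P}. \<bar>f t - poly (p n) t\<bar> < 1 / real (Suc n)"
    using weier_seq[OF f] by blast
  have lim: "(\<lambda>n. op_poly (p n) P x) \<longlonglongrightarrow> fcalc f P x"
    by (rule fcalc_lim[OF P f weier_seq_unif[OF p]])
  have b: "norm (op_poly q P x - op_poly (p n) P x) \<le> (\<delta> + 1 / real (Suc n)) * norm x" for n
  proof (rule op_poly_close[OF P])
    show "\<forall>t\<in>{0..onorm P}. \<bar>poly q t - poly (p n) t\<bar> \<le> \<delta> + 1 / real (Suc n)"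
    proof
      fix t assume t: "t \<in> {0..onorm P}"
      have "\<bar>f t - poly (p n) t\<bar> < 1 / real (Suc n)" "\<bar>poly q t - f t\<bar> \<le> \<delta>"
        using p q t by auto
      then show "\<bar>poly q t - poly (p n) t\<bar> \<le> \<delta> + 1 / real (Suc n)" by linarith
    qed
  qed
  have l1: "(\<lambda>n. norm (op_poly q P x - op_poly (p n) P x)) \<longlonglongrightarrow> norm (op_poly q P x - fcalc f P x)"
    by (intro tendsto_norm tendsto_diff tendsto_const lim)
  have l2: "(\<lambda>n. (\<delta> + 1 / real (Suc n)) * norm x) \<longlonglongrightarrow> (\<delta> + 0) * norm x"
    by (intro tendsto_mult tendsto_add tendsto_const LIMSEQ_Suc[OF lim_const_over_n])
  show ?thesis using tendsto_le[OF _ l2 l1] b by simp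
qed

lemma unif_of_bound:
  assumes K: "0 \<le> K" and b: "\<forall>n. \<forall>t\<in>S. \<bar>h t - poly (r n) t\<bar> \<le> K / real (Suc n)"
  shows "uniform_limit S (\<lambda>n t. poly (r n) t) h sequentially"
proof (rule uniform_limitI)
  fix e :: real assume e: "0 < e"
  obtain N :: nat where N: "1 / real (Suc N) < e / (K + 1)"
    using e K by (metis nat_approx_posE divide_pos_pos add_nonneg_pos zero_less_one)
  show "\<forall>\<^sub>F n in sequentially. \<forall>t\<in>S. dist (poly (r n) t) (h t) < e"
  proof (rule eventually_sequentiallyI[of N])
    fix n assume n: "N \<le> n"
    have le: "1 / real (Suc n) \<le> 1 / real (Suc N)" using n by (simp add: frac_le)
    show "\<forall>t\<in>S. dist (poly (r n) t) (h t) < e"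
    proof
      fix t assume t: "t \<in> S"
      have "\<bar>h t - poly (r n) t\<bar> \<le> K * (1 / real (Suc n))" using b t by simp
      also have "\<dots> \<le> K * (1 / real (Suc N))" using le K by (rule mult_left_mono)
      also have "\<dots> \<le> (K + 1) * (1 / real (Suc N))" by (intro mult_right_mono) auto
      also have "\<dots> < (K + 1) * (e / (K + 1))" using N K by (intro mult_strict_left_mono) auto
      also have "\<dots> = e" using K by simp
      finally show "dist (poly (r n) t) (h t) < e" by (simp add: dist_real_def abs_minus_commute)
    qed
  qed
qed

lemma weier_seq':
  fixes f :: "real \<Rightarrow> real"
  assumes f: "continuous_on {a..b} f"
  obtains p :: "nat \<Rightarrow> real poly" where "\<And>n t. t \<in> {a..b} \<Longrightarrow> \<bar>f t - poly (p n) t\<bar> \<le> 1 / real (Suc n)"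
proof -
  obtain p :: "nat \<Rightarrow> real poly" where "\<forall>n. \<forall>t\<in>{a..b}. \<bar>f t - poly (p n) t\<bar> < 1 / real (Suc n)"
    using weier_seq[OF f] by blast
  then show ?thesis using that less_imp_le by blast
qed

lemma cont_bound:
  fixes f :: "real \<Rightarrow> real"
  assumes f: "continuous_on {a..b} f"
  obtains B where "0 \<le> B" "\<And>t. t \<in> {a..b} \<Longrightarrow> \<bar>f t\<bar> \<le> B"
proof -
  have "bounded (f ` {a..b})" by (rule compact_imp_bounded[OF compact_continuous_image[OF f compact_Icc]])
  then obtain B where B: "\<forall>t\<in>{a..b}. \<bar>f t\<bar> \<le> B" by (auto simp: bounded_iff)
  show ?thesis
  proof (rule that[of "max B 0"])
    show "0 \<le> max B 0" by simp
    fix t assume "t \<in> {a..b}"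
    then have "\<bar>f t\<bar> \<le> B" using B by blast
    then show "\<bar>f t\<bar> \<le> max B 0" by simp
  qed
qed

lemma fcalc_via:
  fixes P :: "'a::chilbert_space \<Rightarrow> 'a"
  assumes P: "posop P" and h: "continuous_on {0..onorm P} h" and K: "0 \<le> K"
    and b: "\<And>n t. t \<in> {0..onorm P} \<Longrightarrow> \<bar>h t - poly (r n) t\<bar> \<le> K / real (Suc n)"
    and l: "(\<lambda>n. op_poly (r n) P x) \<longlonglongrightarrow> v"
  shows "fcalc h P x = v"
proof -
  have "(\<lambda>n. op_poly (r n) P x) \<longlonglongrightarrow> fcalc h P x"
    by (rule fcalc_lim[OF P h unif_of_bound[OF K]]) (use b in blast)
  then show ?thesis using l LIMSEQ_unique by blast
qed

lemma fcalc_const: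
  fixes P :: "'a::chilbert_space \<Rightarrow> 'a"
  assumes P: "posop P"
  shows "fcalc (\<lambda>t. a) P x = a *\<^sub>R x"
  by (rule fcalc_via[OF P _ order_refl, where r = "\<lambda>n. [:a:]"]) (simp_all add: op_poly_const)

lemma fcalc_id:
  fixes P :: "'a::chilbert_space \<Rightarrow> 'a"
  assumes P: "posop P"
  shows "fcalc (\<lambda>t. t) P x = P x"
  using P by (intro fcalc_via[OF P _ order_refl, where r = "\<lambda>n. [:0,1:]"])
    (simp_all add: op_poly_X posop_def continuous_on_id)

lemma fcalc_lin:
  fixes P :: "'a::chilbert_space \<Rightarrow> 'a"
  assumes P: "posop P" and f: "continuous_on {0..onorm P} f" and g: "continuous_on {0..onorm P} g"
  shows "fcalc (\<lambda>t. a * f t + b * g t) P x = a *\<^sub>R fcalc f P x + b *\<^sub>R fcalc g P x"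
proof -
  obtain p where p: "\<And>n t. t \<in> {0..onorm P} \<Longrightarrow> \<bar>f t - poly (p n) t\<bar> \<le> 1 / real (Suc n)"
    using weier_seq'[OF f] by blast
  obtain q where q: "\<And>n t. t \<in> {0..onorm P} \<Longrightarrow> \<bar>g t - poly (q n) t\<bar> \<le> 1 / real (Suc n)"
    using weier_seq'[OF g] by blast
  have lp: "(\<lambda>n. op_poly (p n) P x) \<longlonglongrightarrow> fcalc f P x"
    by (rule fcalc_lim[OF P f unif_of_bound[of 1]]) (use p in auto)
  have lq: "(\<lambda>n. op_poly (q n) P x) \<longlonglongrightarrow> fcalc g P x"
    by (rule fcalc_lim[OF P g unif_of_bound[of 1]]) (use q in auto)
  show ?thesis
  proof (rule fcalc_via[OF P _ _ _, where r = "\<lambda>n. smult a (p n) + smult b (q n)" and K = "\<bar>a\<bar> + \<bar>b\<bar>"])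
    show "continuous_on {0..onorm P} (\<lambda>t. a * f t + b * g t)"
      by (intro continuous_intros f g)
    show "0 \<le> \<bar>a\<bar> + \<bar>b\<bar>" by simp
    fix n t assume t: "t \<in> {0..onorm P}"
    have "\<bar>a * f t + b * g t - poly (smult a (p n) + smult b (q n)) t\<bar>
        = \<bar>a * (f t - poly (p n) t) + b * (g t - poly (q n) t)\<bar>" by (simp add: algebra_simps)
    also have "\<dots> \<le> \<bar>a\<bar> * \<bar>f t - poly (p n) t\<bar> + \<bar>b\<bar> * \<bar>g t - poly (q n) t\<bar>"
      by (metis abs_mult abs_triangle_ineq)
    also have "\<dots> \<le> \<bar>a\<bar> * (1 / real (Suc n)) + \<bar>b\<bar> * (1 / real (Suc n))"
      by (intro add_mono mult_left_mono p q t) simp_all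
    also have "\<dots> = (\<bar>a\<bar> + \<bar>b\<bar>) / real (Suc n)" by (simp add: add_divide_distrib)
    finally show "\<bar>a * f t + b * g t - poly (smult a (p n) + smult b (q n)) t\<bar> \<le> (\<bar>a\<bar> + \<bar>b\<bar>) / real (Suc n)" .
  next
    have "(\<lambda>n. a *\<^sub>R op_poly (p n) P x + b *\<^sub>R op_poly (q n) P x) \<longlonglongrightarrow> a *\<^sub>R fcalc f P x + b *\<^sub>R fcalc g P x"
      by (intro tendsto_intros lp lq)
    then show "(\<lambda>n. op_poly (smult a (p n) + smult b (q n)) P x) \<longlonglongrightarrow> a *\<^sub>R fcalc f P x + b *\<^sub>R fcalc g P x"
      by (simp add: op_poly_add op_poly_smult)
  qed
qed

lemma fcalc_norm:
  fixes P :: "'a::chilbert_space \<Rightarrow> 'a"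
  assumes P: "posop P" and f: "continuous_on {0..onorm P} f" and M: "\<And>t. t \<in> {0..onorm P} \<Longrightarrow> \<bar>f t\<bar> \<le> M"
  shows "norm (fcalc f P x) \<le> M * norm x"
proof -
  obtain p where p: "\<And>n t. t \<in> {0..onorm P} \<Longrightarrow> \<bar>f t - poly (p n) t\<bar> \<le> 1 / real (Suc n)"
    using weier_seq'[OF f] by blast
  have lp: "(\<lambda>n. op_poly (p n) P x) \<longlonglongrightarrow> fcalc f P x"
    by (rule fcalc_lim[OF P f unif_of_bound[of 1]]) (use p in auto)
  have b: "norm (op_poly (p n) P x) \<le> (M + 1 / real (Suc n)) * norm x" for n
  proof (rule op_poly_norm_bound[OF P])
    show "\<forall>t\<in>{0..onorm P}. \<bar>poly (p n) t\<bar> \<le> M + 1 / real (Suc n)"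
    proof
      fix t assume t: "t \<in> {0..onorm P}"
      show "\<bar>poly (p n) t\<bar> \<le> M + 1 / real (Suc n)" using p[OF t, of n] M[OF t] by linarith
    qed
  qed
  have l2: "(\<lambda>n. (M + 1 / real (Suc n)) * norm x) \<longlonglongrightarrow> (M + 0) * norm x"
    by (intro tendsto_mult tendsto_add tendsto_const LIMSEQ_Suc[OF lim_const_over_n])
  show ?thesis using tendsto_le[OF _ l2 tendsto_norm[OF lp]] b by simp
qed

lemma cinner_tendsto_left:
  assumes "u \<longlonglongrightarrow> a" shows "(\<lambda>n. cinner (u n) y) \<longlonglongrightarrow> cinner a (y::'a::complex_inner)"
  by (rule bounded_linear.tendsto[OF bclin_cinner_left_bl[OF bclin_id] assms])

lemma cinner_tendsto_right:
  assumes "u \<longlonglongrightarrow> a" shows "(\<lambda>n. cinner y (u n)) \<longlonglongrightarrow> cinner (y::'a::complex_inner) a"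
proof -
  have "(\<lambda>n. cnj (cinner (u n) y)) \<longlonglongrightarrow> cnj (cinner a y)"
    by (intro tendsto_cnj cinner_tendsto_left assms)
  moreover have "(\<lambda>n. cnj (cinner (u n) y)) = (\<lambda>n. cinner y (u n))"
    by (rule ext) (rule cinner_commute[symmetric])
  moreover have "cnj (cinner a y) = cinner y a" by (rule cinner_commute[symmetric])
  ultimately show ?thesis by simp
qed

lemma fcalc_sadj:
  fixes P :: "'a::chilbert_space \<Rightarrow> 'a"
  assumes P: "posop P" and f: "continuous_on {0..onorm P} f"
  shows "sadj (fcalc f P)"
  unfolding sadj_def
proof (intro allI)
  fix x y
  have bc: "bounded_clinear P" and sa: "sadj P" using P by (auto simp: posop_def)
  obtain p where p: "\<And>n t. t \<in> {0..onorm P} \<Longrightarrow> \<bar>f t - poly (p n) t\<bar> \<le> 1 / real (Suc n)"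
    using weier_seq'[OF f] by blast
  have lp: "(\<lambda>n. op_poly (p n) P z) \<longlonglongrightarrow> fcalc f P z" for z
    by (rule fcalc_lim[OF P f unif_of_bound[of 1]]) (use p in auto)
  have "(\<lambda>n. cinner (op_poly (p n) P x) y) \<longlonglongrightarrow> cinner (fcalc f P x) y"
    by (rule cinner_tendsto_left[OF lp])
  moreover have "(\<lambda>n. cinner (op_poly (p n) P x) y) \<longlonglongrightarrow> cinner x (fcalc f P y)"
    using cinner_tendsto_right[OF lp[of y], of x] op_poly_sadj[OF bc sa] by (simp add: sadj_def)
  ultimately show "cinner (fcalc f P x) y = cinner x (fcalc f P y)" by (rule LIMSEQ_unique)
qed

lemma fcalc_pos:
  fixes P :: "'a::chilbert_space \<Rightarrow> 'a"
  assumes P: "posop P" and f: "continuous_on {0..onorm P} f" and nn: "\<And>t. t \<in> {0..onorm P} \<Longrightarrow> 0 \<le> f t"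
  shows "0 \<le> Re (cinner (fcalc f P x) x)"
proof -
  obtain B where B: "0 \<le> B" "\<And>t. t \<in> {0..onorm P} \<Longrightarrow> \<bar>f t\<bar> \<le> B" using cont_bound[OF f] by blast
  have g: "continuous_on {0..onorm P} (\<lambda>t. 1 * f t + (- (B/2)) * 1)" by (intro continuous_intros f)
  have gc: "continuous_on {0..onorm P} (\<lambda>t::real. 1::real)" by simp
  have e: "fcalc (\<lambda>t. 1 * f t + (- (B/2)) * 1) P x = fcalc f P x - (B/2) *\<^sub>R x"
    using fcalc_lin[OF P f gc, where a=1 and b="- (B/2)" and x=x]
      fcalc_const[OF P, where a=1 and x=x] by simp
  have "norm (fcalc (\<lambda>t. 1 * f t + (- (B/2)) * 1) P x) \<le> (B/2) * norm x"
  proof (rule fcalc_norm[OF P g])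
    fix t assume t: "t \<in> {0..onorm P}"
    show "\<bar>1 * f t + - (B / 2) * 1\<bar> \<le> B / 2" using B(2)[OF t] nn[OF t] by linarith
  qed
  then have n: "norm (fcalc f P x - (B/2) *\<^sub>R x) \<le> (B/2) * norm x" using e by simp
  have "Re (cinner (fcalc f P x - (B/2) *\<^sub>R x) x) \<ge> - ((B/2) * norm x * norm x)"
  proof -
    have "\<bar>Re (cinner (fcalc f P x - (B/2) *\<^sub>R x) x)\<bar> \<le> cmod (cinner (fcalc f P x - (B/2) *\<^sub>R x) x)"
      by (rule abs_Re_le_cmod)
    also have "\<dots> \<le> norm (fcalc f P x - (B/2) *\<^sub>R x) * norm x" by (rule cauchy_schwarz)
    also have "\<dots> \<le> (B/2) * norm x * norm x" using n by (intro mult_right_mono) auto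
    finally show ?thesis by linarith
  qed
  then show ?thesis by (simp add: cinner_diff_left cinner_scaleR_left Re_cinner_self power2_eq_square)
qed

lemma fcalc_posop:
  fixes P :: "'a::chilbert_space \<Rightarrow> 'a"
  assumes P: "posop P" and f: "continuous_on {0..onorm P} f" and nn: "\<And>t. t \<in> {0..onorm P} \<Longrightarrow> 0 \<le> f t"
  shows "posop (fcalc f P)"
  unfolding posop_def using fcalc_bclin[OF P f] fcalc_sadj[OF P f] fcalc_pos[OF P f nn] by blast

lemma fcalc_mult:
  fixes P :: "'a::chilbert_space \<Rightarrow> 'a"
  assumes P: "posop P" and f: "continuous_on {0..onorm P} f" and g: "continuous_on {0..onorm P} g"
  shows "fcalc (\<lambda>t. f t * g t) P x = fcalc f P (fcalc g P x)"
proof -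
  obtain p where p: "\<And>n t. t \<in> {0..onorm P} \<Longrightarrow> \<bar>f t - poly (p n) t\<bar> \<le> 1 / real (Suc n)"
    using weier_seq'[OF f] by blast
  obtain q where q: "\<And>n t. t \<in> {0..onorm P} \<Longrightarrow> \<bar>g t - poly (q n) t\<bar> \<le> 1 / real (Suc n)"
    using weier_seq'[OF g] by blast
  obtain Bf where Bf: "0 \<le> Bf" "\<And>t. t \<in> {0..onorm P} \<Longrightarrow> \<bar>f t\<bar> \<le> Bf" using cont_bound[OF f] by blast
  obtain Bg where Bg: "0 \<le> Bg" "\<And>t. t \<in> {0..onorm P} \<Longrightarrow> \<bar>g t\<bar> \<le> Bg" using cont_bound[OF g] by blast
  have lp: "(\<lambda>n. op_poly (p n) P z) \<longlonglongrightarrow> fcalc f P z" for z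
    by (rule fcalc_lim[OF P f unif_of_bound[of 1]]) (use p in auto)
  have lq: "(\<lambda>n. op_poly (q n) P z) \<longlonglongrightarrow> fcalc g P z" for z
    by (rule fcalc_lim[OF P g unif_of_bound[of 1]]) (use q in auto)
  have pb: "norm (op_poly (p n) P z) \<le> (Bf + 1) * norm z" for n z
  proof (rule op_poly_norm_bound[OF P])
    show "\<forall>t\<in>{0..onorm P}. \<bar>poly (p n) t\<bar> \<le> Bf + 1"
    proof
      fix t assume t: "t \<in> {0..onorm P}"
      have "1 / real (Suc n) \<le> 1" by simp
      then show "\<bar>poly (p n) t\<bar> \<le> Bf + 1" using p[OF t, of n] Bf(2)[OF t] by linarith
    qed
  qed
  show ?thesis
  proof (rule fcalc_via[OF P _ _ _, where r = "\<lambda>n. p n * q n" and K = "Bf + Bg + 1"])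
    show "continuous_on {0..onorm P} (\<lambda>t. f t * g t)" by (intro continuous_intros f g)
    show "0 \<le> Bf + Bg + 1" using Bf Bg by simp
    fix n t assume t: "t \<in> {0..onorm P}"
    define d where "d = 1 / real (Suc n)"
    have d: "0 \<le> d" "d \<le> 1" by (simp_all add: d_def)
    have e1: "\<bar>f t - poly (p n) t\<bar> \<le> d" "\<bar>g t - poly (q n) t\<bar> \<le> d" using p[OF t] q[OF t] by (simp_all add: d_def)
    have pq: "\<bar>poly (p n) t\<bar> \<le> Bf + 1" using e1(1) Bf(2)[OF t] d by linarith
    have "\<bar>f t * g t - poly (p n * q n) t\<bar> = \<bar>(f t - poly (p n) t) * g t + poly (p n) t * (g t - poly (q n) t)\<bar>"
      by (simp add: algebra_simps)
    also have "\<dots> \<le> \<bar>f t - poly (p n) t\<bar> * \<bar>g t\<bar> + \<bar>poly (p n) t\<bar> * \<bar>g t - poly (q n) t\<bar>"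
      by (metis abs_mult abs_triangle_ineq)
    also have "\<dots> \<le> d * Bg + (Bf + 1) * d"
      by (intro add_mono mult_mono e1 Bg(2)[OF t] pq) (use d Bf in auto)
    also have "\<dots> = (Bf + Bg + 1) / real (Suc n)" by (simp add: d_def add_divide_distrib)
    finally show "\<bar>f t * g t - poly (p n * q n) t\<bar> \<le> (Bf + Bg + 1) / real (Suc n)" .
  next
    have a: "(\<lambda>n. op_poly (p n) P (op_poly (q n) P x) - op_poly (p n) P (fcalc g P x)) \<longlonglongrightarrow> 0"
    proof (rule Lim_null_comparison)
      have bc: "bounded_clinear P" using P by (simp add: posop_def)
      show "\<forall>\<^sub>F n in sequentially. norm (op_poly (p n) P (op_poly (q n) P x) - op_poly (p n) P (fcalc g P x))
          \<le> (Bf + 1) * norm (op_poly (q n) P x - fcalc g P x)"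
        using pb by (simp add: bclin_diff[OF op_poly_bclin[OF bc], symmetric])
      have "(\<lambda>n. op_poly (q n) P x - fcalc g P x) \<longlonglongrightarrow> 0"
        using tendsto_diff[OF lq[of x] tendsto_const[of "fcalc g P x"]] by simp
      then show "(\<lambda>n. (Bf + 1) * norm (op_poly (q n) P x - fcalc g P x)) \<longlonglongrightarrow> 0"
        using tendsto_mult_right_zero tendsto_norm_zero by blast
    qed
    have "(\<lambda>n. (op_poly (p n) P (op_poly (q n) P x) - op_poly (p n) P (fcalc g P x)) + op_poly (p n) P (fcalc g P x))
        \<longlonglongrightarrow> 0 + fcalc f P (fcalc g P x)"
      by (intro tendsto_add a lp)
    then show "(\<lambda>n. op_poly (p n * q n) P x) \<longlonglongrightarrow> fcalc f P (fcalc g P x)"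
      using P by (simp add: op_poly_mult posop_def)
  qed
qed

lemma fcalc_cong:
  assumes "\<And>t. t \<in> {0..onorm P} \<Longrightarrow> f t = g t"
  shows "fcalc f P = fcalc g P"
proof -
  have "uniform_limit {0..onorm P} h f F \<longleftrightarrow> uniform_limit {0..onorm P} h g F" for h and F :: "nat filter"
    using assms by (simp add: uniform_limit_iff)
  then show ?thesis by (simp add: fcalc_def)
qed

lemma fcalc_diff_norm:
  fixes P :: "'a::chilbert_space \<Rightarrow> 'a"
  assumes P: "posop P" and f: "continuous_on {0..onorm P} f" and g: "continuous_on {0..onorm P} g"
    and d: "\<And>t. t \<in> {0..onorm P} \<Longrightarrow> \<bar>f t - g t\<bar> \<le> \<delta>"
  shows "norm (fcalc f P x - fcalc g P x) \<le> \<delta> * norm x"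
proof -
  have "fcalc (\<lambda>t. 1 * f t + (-1) * g t) P x = fcalc f P x - fcalc g P x"
    using fcalc_lin[OF P f g, where a=1 and b="-1" and x=x] by simp
  moreover have "norm (fcalc (\<lambda>t. 1 * f t + (-1) * g t) P x) \<le> \<delta> * norm x"
  proof (rule fcalc_norm[OF P])
    show "continuous_on {0..onorm P} (\<lambda>t. 1 * f t + - 1 * g t)" by (intro continuous_intros f g)
    fix t assume "t \<in> {0..onorm P}"
    then show "\<bar>1 * f t + - 1 * g t\<bar> \<le> \<delta>" using d by simp
  qed
  ultimately show ?thesis by simp
qed

lemma sqrt_cont: "continuous_on S (\<lambda>u::real. sqrt u)"
  by (intro continuous_intros)

lemma comp_sqrt_cont:
  fixes k :: "real \<Rightarrow> real"
  assumes k: "continuous_on {0..} k"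
  shows "continuous_on {0..c} (\<lambda>u. k (sqrt u))"
  by (rule continuous_on_compose2[OF k sqrt_cont]) auto

lemma cont_sub: "continuous_on {0..} k \<Longrightarrow> continuous_on {0..c} (k::real \<Rightarrow> real)"
  by (rule continuous_on_subset) auto

lemma fcalc_sqrt_posop:
  fixes X :: "'a::chilbert_space \<Rightarrow> 'a"
  assumes X: "posop X"
  shows "posop (fcalc sqrt X)" and "onorm (fcalc sqrt X) \<le> sqrt (onorm X)"
proof -
  have sc: "continuous_on {0..onorm X} sqrt" using sqrt_cont[of "{0..onorm X}"] by (simp add: fun_eq_iff)
  show "posop (fcalc sqrt X)" by (rule fcalc_posop[OF X sc]) simp
  show "onorm (fcalc sqrt X) \<le> sqrt (onorm X)"
  proof (rule onorm_bound)
    have "bounded_clinear X" using X by (simp add: posop_def)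
    then show "0 \<le> sqrt (onorm X)" using onorm_pos_le[OF bounded_clinear_linear] by simp
    fix x show "norm (fcalc sqrt X x) \<le> sqrt (onorm X) * norm x"
      by (rule fcalc_norm[OF X sc]) auto
  qed
qed

lemma op_poly_sqrt:
  fixes X :: "'a::chilbert_space \<Rightarrow> 'a"
  assumes X: "posop X"
  shows "op_poly q (fcalc sqrt X) y = fcalc (\<lambda>u. poly q (sqrt u)) X y"
proof (induction q arbitrary: y)
  case 0
  have "fcalc (\<lambda>u. poly 0 (sqrt u)) X y = 0 *\<^sub>R y" using fcalc_const[OF X, where a=0] by simp
  then show ?case by simp
next
  case (pCons a q)
  have S: "posop (fcalc sqrt X)" by (rule fcalc_sqrt_posop[OF X])
  have sc: "continuous_on {0..onorm X} sqrt" using sqrt_cont[of "{0..onorm X}"] by (simp add: fun_eq_iff)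
  have qc: "continuous_on {0..onorm X} (\<lambda>u. poly q (sqrt u))"
    by (intro continuous_intros)
  have pc: "continuous_on {0..onorm X} (\<lambda>u. sqrt u * poly q (sqrt u))"
    by (intro continuous_intros)
  have cc: "continuous_on {0..onorm X} (\<lambda>u::real. 1::real)" by simp
  have "op_poly (pCons a q) (fcalc sqrt X) y = a *\<^sub>R y + fcalc sqrt X (op_poly q (fcalc sqrt X) y)"
    using S by (simp add: op_poly_pCons posop_def)
  also have "\<dots> = a *\<^sub>R y + fcalc sqrt X (fcalc (\<lambda>u. poly q (sqrt u)) X y)" by (simp add: pCons.IH)
  also have "fcalc sqrt X (fcalc (\<lambda>u. poly q (sqrt u)) X y) = fcalc (\<lambda>u. sqrt u * poly q (sqrt u)) X y"
    by (rule fcalc_mult[OF X sc qc, symmetric])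
  also have "a *\<^sub>R y + fcalc (\<lambda>u. sqrt u * poly q (sqrt u)) X y
      = fcalc (\<lambda>u. a * 1 + 1 * (sqrt u * poly q (sqrt u))) X y"
    using fcalc_lin[OF X cc pc, where a=a and b=1 and x=y] fcalc_const[OF X, where a=1 and x=y] by simp
  also have "(\<lambda>u. a * 1 + 1 * (sqrt u * poly q (sqrt u))) = (\<lambda>u. poly (pCons a q) (sqrt u))"
    by simp
  finally show ?case .
qed

lemma fcalc_sqrt_comp:
  fixes X :: "'a::chilbert_space \<Rightarrow> 'a"
  assumes X: "posop X" and k: "continuous_on {0..} k"
  shows "fcalc k (fcalc sqrt X) y = fcalc (\<lambda>u. k (sqrt u)) X y"
proof -
  define S where "S = fcalc sqrt X"
  have S: "posop S" and Sn: "onorm S \<le> sqrt (onorm X)" using fcalc_sqrt_posop[OF X] by (simp_all add: S_def)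
  have kc: "continuous_on {0..sqrt (onorm X)} k" by (rule cont_sub[OF k])
  obtain q where q: "\<And>n t. t \<in> {0..sqrt (onorm X)} \<Longrightarrow> \<bar>k t - poly (q n) t\<bar> \<le> 1 / real (Suc n)"
    using weier_seq'[OF kc] by blast
  have l1: "(\<lambda>n. op_poly (q n) S y) \<longlonglongrightarrow> fcalc k S y"
  proof (rule fcalc_lim[OF S cont_sub[OF k] unif_of_bound[of 1]])
    show "\<forall>n. \<forall>t\<in>{0..onorm S}. \<bar>k t - poly (q n) t\<bar> \<le> 1 / real (Suc n)"
      using q Sn by auto
  qed simp
  have kc2: "continuous_on {0..onorm X} (\<lambda>u. k (sqrt u))" by (rule comp_sqrt_cont[OF k])
  have l2: "(\<lambda>n. fcalc (\<lambda>u. poly (q n) (sqrt u)) X y) \<longlonglongrightarrow> fcalc (\<lambda>u. k (sqrt u)) X y"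
  proof (rule LIM_zero_cancel, rule Lim_null_comparison)
    have qc: "continuous_on {0..onorm X} (\<lambda>u. poly (q n) (sqrt u))" for n by (intro continuous_intros)
    show "\<forall>\<^sub>F n in sequentially. norm (fcalc (\<lambda>u. poly (q n) (sqrt u)) X y - fcalc (\<lambda>u. k (sqrt u)) X y)
        \<le> 1 / real (Suc n) * norm y"
    proof (rule always_eventually, rule allI, rule fcalc_diff_norm[OF X qc kc2])
      fix n t assume t: "t \<in> {0..onorm X}"
      then have "sqrt t \<in> {0..sqrt (onorm X)}" by (auto simp: real_sqrt_le_iff)
      from q[OF this, of n] show "\<bar>poly (q n) (sqrt t) - k (sqrt t)\<bar> \<le> 1 / real (Suc n)"
        by (simp add: abs_minus_commute)
    qed
    show "(\<lambda>n. 1 / real (Suc n) * norm y) \<longlonglongrightarrow> 0"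
      by (rule tendsto_mult_left_zero[OF LIMSEQ_Suc[OF lim_const_over_n]])
  qed
  have "(\<lambda>n. op_poly (q n) S y) = (\<lambda>n. fcalc (\<lambda>u. poly (q n) (sqrt u)) X y)"
    by (simp add: S_def op_poly_sqrt[OF X])
  then have "fcalc k S y = fcalc (\<lambda>u. k (sqrt u)) X y" using l1 l2 LIMSEQ_unique by metis
  then show ?thesis by (simp add: S_def)
qed

lemma op_poly_intertwine:
  fixes A :: "'a::chilbert_space \<Rightarrow> 'a"
  assumes A: "bounded_clinear A"
  shows "A (op_poly p (\<lambda>x. adj A (A x)) x) = op_poly p (\<lambda>x. A (adj A x)) (A x)"
proof (induction p arbitrary: x)
  case 0 then show ?case by (simp add: bclin_zero[OF A])
next
  case (pCons a p)
  have X: "bounded_clinear (\<lambda>x. adj A (A x))" by (rule bclin_compose[OF adj_bclin[OF A] A])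
  have Y: "bounded_clinear (\<lambda>x. A (adj A x))" by (rule bclin_compose[OF A adj_bclin[OF A]])
  show ?case
    by (simp add: op_poly_pCons[OF X] op_poly_pCons[OF Y] bclin_add[OF A] bclin_scaleR_lin[OF A] pCons.IH)
qed

lemma Y_posop:
  fixes A :: "'a::chilbert_space \<Rightarrow> 'a"
  assumes A: "bounded_clinear A"
  shows "posop (\<lambda>x. A (adj A x))"
  using AstarA_posop(1)[OF adj_bclin[OF A]] adj_adj[OF A] by simp

lemma fcalc_intertwine:
  fixes A :: "'a::chilbert_space \<Rightarrow> 'a"
  assumes A: "bounded_clinear A" and h: "continuous_on {0..} h"
  shows "A (fcalc h (\<lambda>x. adj A (A x)) x) = fcalc h (\<lambda>x. A (adj A x)) (A x)"
proof -
  define X where "X = (\<lambda>x. adj A (A x))"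
  define Y where "Y = (\<lambda>x. A (adj A x))"
  have Xp: "posop X" unfolding X_def by (rule AstarA_posop(1)[OF A])
  have Yp: "posop Y" unfolding Y_def by (rule Y_posop[OF A])
  define m where "m = max (onorm X) (onorm Y)"
  obtain p where p: "\<And>n t. t \<in> {0..m} \<Longrightarrow> \<bar>h t - poly (p n) t\<bar> \<le> 1 / real (Suc n)"
    using weier_seq'[OF cont_sub[OF h]] by blast
  have lX: "(\<lambda>n. op_poly (p n) X x) \<longlonglongrightarrow> fcalc h X x"
    by (rule fcalc_lim[OF Xp cont_sub[OF h] unif_of_bound[of 1]]) (use p in \<open>auto simp: m_def\<close>)
  have lY: "(\<lambda>n. op_poly (p n) Y (A x)) \<longlonglongrightarrow> fcalc h Y (A x)"
    by (rule fcalc_lim[OF Yp cont_sub[OF h] unif_of_bound[of 1]]) (use p in \<open>auto simp: m_def\<close>)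
  have "(\<lambda>n. A (op_poly (p n) X x)) \<longlonglongrightarrow> A (fcalc h X x)"
    by (rule bounded_linear.tendsto[OF bounded_clinear_linear[OF A] lX])
  moreover have "(\<lambda>n. A (op_poly (p n) X x)) = (\<lambda>n. op_poly (p n) Y (A x))"
    unfolding X_def Y_def by (simp add: op_poly_intertwine[OF A])
  ultimately show ?thesis using lY LIMSEQ_unique unfolding X_def Y_def by metis
qed

lemma AX_bound:
  fixes A :: "'a::chilbert_space \<Rightarrow> 'a"
  assumes A: "bounded_clinear A" and psi: "continuous_on {0..onorm (\<lambda>x. adj A (A x))} \<psi>"
    and M: "\<And>u. u \<in> {0..onorm (\<lambda>x. adj A (A x))} \<Longrightarrow> \<bar>\<psi> u * (u * \<psi> u)\<bar> \<le> M"
  shows "(norm (A (fcalc \<psi> (\<lambda>x. adj A (A x)) z)))^2 \<le> M * (norm z)^2"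
proof -
  define X where "X = (\<lambda>x. adj A (A x))"
  have Xp: "posop X" unfolding X_def by (rule AstarA_posop(1)[OF A])
  have psi': "continuous_on {0..onorm X} \<psi>" using psi by (simp add: X_def)
  have idc: "continuous_on {0..onorm X} (\<lambda>u::real. u)" by (rule continuous_on_id)
  have c2: "continuous_on {0..onorm X} (\<lambda>u. u * \<psi> u)" by (intro continuous_intros psi')
  define w where "w = fcalc \<psi> X z"
  have "(norm (A w))^2 = Re (cinner (A w) (A w))" by (simp add: Re_cinner_self)
  also have "cinner (A w) (A w) = cinner (X w) w" by (simp add: X_def AstarA_posop(2)[OF A])
  also have "X w = fcalc (\<lambda>u. u * \<psi> u) X z"
    using fcalc_mult[OF Xp idc psi', of z] fcalc_id[OF Xp, of w] by (simp add: w_def)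
  also have "cinner (fcalc (\<lambda>u. u * \<psi> u) X z) w = cinner (fcalc \<psi> X (fcalc (\<lambda>u. u * \<psi> u) X z)) z"
    using fcalc_sadj[OF Xp psi'] by (simp add: sadj_def w_def)
  also have "fcalc \<psi> X (fcalc (\<lambda>u. u * \<psi> u) X z) = fcalc (\<lambda>u. \<psi> u * (u * \<psi> u)) X z"
    by (rule fcalc_mult[OF Xp psi' c2, symmetric])
  also have "Re (cinner (fcalc (\<lambda>u. \<psi> u * (u * \<psi> u)) X z) z) \<le> M * (norm z)^2"
  proof -
    have c3: "continuous_on {0..onorm X} (\<lambda>u. \<psi> u * (u * \<psi> u))" by (intro continuous_intros psi')
    have "Re (cinner (fcalc (\<lambda>u. \<psi> u * (u * \<psi> u)) X z) z) \<le> cmod (cinner (fcalc (\<lambda>u. \<psi> u * (u * \<psi> u)) X z) z)"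
      by (rule complex_Re_le_cmod)
    also have "\<dots> \<le> norm (fcalc (\<lambda>u. \<psi> u * (u * \<psi> u)) X z) * norm z" by (rule cauchy_schwarz)
    also have "\<dots> \<le> M * norm z * norm z"
      by (intro mult_right_mono fcalc_norm[OF Xp c3]) (use M in \<open>auto simp: X_def\<close>)
    finally show ?thesis by (simp add: power2_eq_square ac_simps)
  qed
  finally show ?thesis by (simp add: w_def X_def)
qed

lemma le_of_eps:
  fixes a b K :: real
  assumes K: "0 \<le> K" and h: "\<And>e. 0 < e \<Longrightarrow> a \<le> b + e * K"
  shows "a \<le> b"
proof (rule ccontr)
  assume "\<not> a \<le> b"
  then have ab: "0 < a - b" by simp
  define e where "e = (a - b) / (K + 1)"
  have e: "0 < e" using ab K by (simp add: e_def)
  have "e * K < a - b"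
  proof -
    have "e * K = (a - b) * (K / (K + 1))" by (simp add: e_def)
    also have "\<dots> < (a - b) * 1" using ab K by (intro mult_strict_left_mono) simp_all
    finally show ?thesis by simp
  qed
  then show False using h[OF e] by simp
qed

lemma sq_frac_le:
  fixes s e :: real
  assumes s: "0 \<le> s" and e: "0 < e"
  shows "s^2 / (s + e)^2 \<le> 1"
proof -
  have "s^2 \<le> (s + e)^2" using s e by (intro power_mono) simp_all
  then show ?thesis using s e by simp
qed

lemma mixed_schwarz:
  fixes A :: "'a::chilbert_space \<Rightarrow> 'a"
  assumes A: "bounded_clinear A"
    and f: "continuous_on {0..} f" and g: "continuous_on {0..} g"
    and fg: "\<forall>t\<ge>0. f t * g t = t"
  shows "cmod (cinner (A x) x) \<le> norm (fcalc f (op_abs A) x) * norm (fcalc g (op_abs (adj A)) x)"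
proof -
  define X where "X = (\<lambda>x. adj A (A x))"
  define Y where "Y = (\<lambda>x. A (adj A x))"
  have Xp: "posop X" unfolding X_def by (rule AstarA_posop(1)[OF A])
  have Yp: "posop Y" unfolding Y_def by (rule Y_posop[OF A])
  have absA: "op_abs A = fcalc sqrt X" by (simp add: op_abs_def X_def)
  have absA': "op_abs (adj A) = fcalc sqrt Y" by (simp add: op_abs_def Y_def adj_adj[OF A])
  have fs: "continuous_on {0..} (\<lambda>u. f (sqrt u))"
    by (rule continuous_on_compose2[OF f sqrt_cont]) auto
  have gs: "continuous_on {0..} (\<lambda>u. g (sqrt u))"
    by (rule continuous_on_compose2[OF g sqrt_cont]) auto
  define F where "F = fcalc (\<lambda>u. f (sqrt u)) X"
  define G where "G = fcalc (\<lambda>u. g (sqrt u)) Y"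
  have FF: "fcalc f (op_abs A) x = F x" unfolding absA F_def by (rule fcalc_sqrt_comp[OF Xp f])
  have GG: "fcalc g (op_abs (adj A)) x = G x" unfolding absA' G_def by (rule fcalc_sqrt_comp[OF Yp g])
  have fsX: "continuous_on {0..onorm X} (\<lambda>u. f (sqrt u))" by (rule cont_sub[OF fs])
  have gsX: "continuous_on {0..onorm X} (\<lambda>u. g (sqrt u))" by (rule cont_sub[OF gs])
  have gsY: "continuous_on {0..onorm Y} (\<lambda>u. g (sqrt u))" by (rule cont_sub[OF gs])
  have Gsa: "sadj G" unfolding G_def by (rule fcalc_sadj[OF Yp gsY])
  have main: "cmod (cinner (A x) x) \<le> norm (F x) * norm (G x) + e * (norm x * norm x)" if e: "0 < e" for e
  proof -
    have pos: "0 < sqrt u + e" if "u \<in> {0..onorm X}" for u using that e by (auto intro: add_nonneg_pos)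
    define r where "r = (\<lambda>u. 1 / (sqrt u + e))"
    define \<phi> where "\<phi> = (\<lambda>u. sqrt u / (sqrt u + e))"
    have rc: "continuous_on {0..onorm X} r" unfolding r_def
      by (intro continuous_intros) (use pos in fastforce)
    have phic: "continuous_on {0..onorm X} \<phi>" unfolding \<phi>_def
      by (intro continuous_intros) (use pos in fastforce)
    have mc: "continuous_on {0..onorm X} (\<lambda>u. g (sqrt u) * r u)" by (intro continuous_intros gsX rc)
    define R where "R = fcalc r X"
    have e1: "fcalc \<phi> X = fcalc (\<lambda>u. (g (sqrt u) * r u) * f (sqrt u)) X"
    proof (rule fcalc_cong)
      fix u assume u: "u \<in> {0..onorm X}"
      have fg1: "f (sqrt u) * g (sqrt u) = sqrt u" using fg u by simp
      have "g (sqrt u) * r u * f (sqrt u) = (f (sqrt u) * g (sqrt u)) * r u" by (simp only: ac_simps)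
      also have "\<dots> = sqrt u * r u" by (simp only: fg1)
      also have "\<dots> = \<phi> u" by (simp add: r_def \<phi>_def)
      finally show "\<phi> u = g (sqrt u) * r u * f (sqrt u)" by simp
    qed
    have e2: "fcalc \<phi> X x = fcalc (\<lambda>u. g (sqrt u) * r u) X (F x)"
      unfolding e1 F_def by (rule fcalc_mult[OF Xp mc fsX])
    have e3: "fcalc (\<lambda>u. g (sqrt u) * r u) X w = fcalc (\<lambda>u. g (sqrt u)) X (R w)" for w
      unfolding R_def by (rule fcalc_mult[OF Xp gsX rc])
    have e4: "A (fcalc (\<lambda>u. g (sqrt u)) X v) = G (A v)" for v
      unfolding G_def X_def Y_def by (rule fcalc_intertwine[OF A gs])
    have APhi: "A (fcalc \<phi> X x) = G (A (R (F x)))" by (simp add: e2 e3 e4)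
    have AR: "norm (A (R z)) \<le> norm z" for z
    proof -
      have "(norm (A (R z)))^2 \<le> 1 * (norm z)^2"
        unfolding R_def X_def
      proof (rule AX_bound[OF A])
        show "continuous_on {0..onorm (\<lambda>x. adj A (A x))} r" using rc by (simp add: X_def)
        fix u assume u: "u \<in> {0..onorm (\<lambda>x. adj A (A x))}"
        then have u0: "0 \<le> u" by simp
        have sp: "0 < sqrt u + e" using u0 e by (simp add: add_nonneg_pos)
        have "r u * (u * r u) = u / (sqrt u + e)^2" by (simp add: r_def power2_eq_square)
        also have "u / (sqrt u + e)^2 = (sqrt u)^2 / (sqrt u + e)^2" using u0 by simp
        finally have "r u * (u * r u) = (sqrt u)^2 / (sqrt u + e)^2" .
        then have "\<bar>r u * (u * r u)\<bar> = (sqrt u)^2 / (sqrt u + e)^2" by simp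
        also have "\<dots> \<le> 1" using u0 e by (intro sq_frac_le) simp_all
        finally show "\<bar>r u * (u * r u)\<bar> \<le> 1" .
      qed
      then have "(norm (A (R z)))^2 \<le> (norm z)^2" by simp
      then show ?thesis by (rule power2_le_imp_le) simp
    qed
    have t1: "cmod (cinner (A (fcalc \<phi> X x)) x) \<le> norm (F x) * norm (G x)"
    proof -
      have "cinner (A (fcalc \<phi> X x)) x = cinner (A (R (F x))) (G x)"
        using Gsa by (simp add: APhi sadj_def)
      then have "cmod (cinner (A (fcalc \<phi> X x)) x) \<le> norm (A (R (F x))) * norm (G x)"
        by (simp add: cauchy_schwarz)
      also have "\<dots> \<le> norm (F x) * norm (G x)" by (intro mult_right_mono AR) simp
      finally show ?thesis .
    qed
    define \<psi> where "\<psi> = (\<lambda>u. 1 * 1 + (-1) * \<phi> u)"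
    have psic: "continuous_on {0..onorm X} \<psi>" unfolding \<psi>_def by (intro continuous_intros phic)
    have wdef: "fcalc \<psi> X x = x - fcalc \<phi> X x"
      using fcalc_lin[OF Xp continuous_on_const phic, where a=1 and b="-1" and x=x]
        fcalc_const[OF Xp, where a=1 and x=x] by (simp add: \<psi>_def)
    have Aw: "norm (A (fcalc \<psi> X x)) \<le> e * norm x"
    proof -
      have "(norm (A (fcalc \<psi> X x)))^2 \<le> e^2 * (norm x)^2"
        unfolding X_def
      proof (rule AX_bound[OF A])
        show "continuous_on {0..onorm (\<lambda>x. adj A (A x))} \<psi>" using psic by (simp add: X_def)
        fix u assume u: "u \<in> {0..onorm (\<lambda>x. adj A (A x))}"
        then have u0: "0 \<le> u" by simp
        have sp: "0 < sqrt u + e" using u0 e by (simp add: add_nonneg_pos)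
        have ps: "\<psi> u = e / (sqrt u + e)"
        proof -
          have a: "\<psi> u = 1 - sqrt u / (sqrt u + e)" by (simp add: \<psi>_def \<phi>_def)
          have "((sqrt u + e) - sqrt u) / (sqrt u + e) = (sqrt u + e) / (sqrt u + e) - sqrt u / (sqrt u + e)"
            by (rule diff_divide_distrib)
          also have "(sqrt u + e) / (sqrt u + e) = 1" using sp by simp
          finally have "e / (sqrt u + e) = 1 - sqrt u / (sqrt u + e)" by simp
          then show ?thesis using a by simp
        qed
        have "\<psi> u * (u * \<psi> u) = e^2 * (u / (sqrt u + e)^2)" by (simp add: ps power2_eq_square)
        also have "e^2 * (u / (sqrt u + e)^2) = e^2 * ((sqrt u)^2 / (sqrt u + e)^2)" using u0 by simp
        finally have "\<psi> u * (u * \<psi> u) = e^2 * ((sqrt u)^2 / (sqrt u + e)^2)" .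
        then have "\<bar>\<psi> u * (u * \<psi> u)\<bar> = e^2 * ((sqrt u)^2 / (sqrt u + e)^2)" by simp
        also have "\<dots> \<le> e^2 * 1" using u0 e by (intro mult_left_mono sq_frac_le) simp_all
        finally show "\<bar>\<psi> u * (u * \<psi> u)\<bar> \<le> e^2" by simp
      qed
      also have "\<dots> = (e * norm x)^2" by (simp add: power_mult_distrib)
      finally show ?thesis by (rule power2_le_imp_le) (use e in simp)
    qed
    have "cinner (A x) x = cinner (A (fcalc \<phi> X x)) x + cinner (A (fcalc \<psi> X x)) x"
      by (simp add: wdef bclin_diff[OF A] cinner_diff_left)
    then have "cmod (cinner (A x) x) \<le> cmod (cinner (A (fcalc \<phi> X x)) x) + cmod (cinner (A (fcalc \<psi> X x)) x)"
      by (simp add: norm_triangle_ineq)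
    also have "cmod (cinner (A (fcalc \<psi> X x)) x) \<le> e * (norm x * norm x)"
    proof -
      have "cmod (cinner (A (fcalc \<psi> X x)) x) \<le> norm (A (fcalc \<psi> X x)) * norm x" by (rule cauchy_schwarz)
      also have "\<dots> \<le> e * norm x * norm x" using Aw by (intro mult_right_mono) simp_all
      finally show ?thesis by (simp add: ac_simps)
    qed
    finally show ?thesis using t1 by simp
  qed
  have "cmod (cinner (A x) x) \<le> norm (F x) * norm (G x)"
    by (rule le_of_eps[of "norm x * norm x", OF _ main]) simp_all
  then show ?thesis by (simp add: FF GG)
qed

lemma tangent_powr:
  fixes q u v :: real
  assumes q: "1 \<le> q" and v: "0 < v" and u: "0 \<le> u"
  shows "v powr q + q * v powr (q - 1) * (u - v) \<le> u powr q"
proof (cases "u = 0")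
  case True
  have "v powr (q - 1) * v = v powr q"
    using v by (simp add: powr_mult_base mult.commute)
  then have "v powr q + q * v powr (q - 1) * (u - v) = v powr q * (1 - q)"
    using True by (simp add: algebra_simps)
  also have "\<dots> \<le> 0" using q by (simp add: mult_nonneg_nonpos)
  finally show ?thesis using True by simp
next
  case False
  then have u0: "0 < u" using u by simp
  have "q * v powr (q - 1) * (u - v) \<le> u powr q - v powr q"
  proof (rule convex_on_imp_above_tangent[OF powr_convex[OF q]])
    show "connected {0::real<..}" by (simp add: convex_connected)
    show "v \<in> interior {0<..}" using v by (subst interior_open) auto
    show "u \<in> {0<..}" using u0 by simp
    show "((\<lambda>x. x powr q) has_real_derivative q * v powr (q - 1)) (at v within {0<..})"
      by (rule has_field_derivative_at_within[OF has_real_derivative_powr[OF v]])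
  qed
  then show ?thesis by simp
qed

lemma sq_powr: "0 \<le> t \<Longrightarrow> 0 < p \<Longrightarrow> (t^2) powr (p/2) = t powr (p::real)"
proof -
  assume t: "0 \<le> t" and p: "0 < p"
  show ?thesis
  proof (cases "t = 0")
    case True then show ?thesis using p by simp
  next
    case False
    then have "t^2 = t powr 2" using t by simp
    then show ?thesis by (simp add: powr_powr)
  qed
qed

lemma jensen_op:
  fixes Q :: "'a::chilbert_space \<Rightarrow> 'a"
  assumes Q: "posop Q" and p: "2 \<le> p" and x: "norm x = 1"
  shows "(norm (Q x)) powr p \<le> Re (cinner (fcalc (\<lambda>t. t powr p) Q x) x)"
proof -
  have bc: "bounded_clinear Q" and sa: "sadj Q" using Q by (auto simp: posop_def)
  have hc: "continuous_on {0..onorm Q} (\<lambda>t. t powr p)"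
    using p by (intro continuous_on_powr' continuous_on_id continuous_on_const) auto
  define c0 where "c0 = norm (Q x)"
  show ?thesis
  proof (cases "c0 = 0")
    case True
    have "0 \<le> Re (cinner (fcalc (\<lambda>t. t powr p) Q x) x)" by (rule fcalc_pos[OF Q hc]) simp
    then show ?thesis using True p by (simp add: c0_def)
  next
    case False
    then have c0: "0 < c0" by (simp add: c0_def)
    define k where "k = (p/2) * (c0^2) powr (p/2 - 1)"
    define a where "a = c0 powr p - k * c0^2"
    define \<psi> where "\<psi> = (\<lambda>t::real. a * 1 + k * (t * t))"
    have one: "continuous_on {0..onorm Q} (\<lambda>t::real. 1::real)" by simp
    have idc: "continuous_on {0..onorm Q} (\<lambda>t::real. t)" by (rule continuous_on_id)
    have sqc: "continuous_on {0..onorm Q} (\<lambda>t::real. t * t)" by (intro continuous_intros)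
    have psic: "continuous_on {0..onorm Q} \<psi>" unfolding \<psi>_def by (intro continuous_intros)
    have psiQ: "fcalc \<psi> Q x = a *\<^sub>R x + k *\<^sub>R Q (Q x)"
    proof -
      have "fcalc \<psi> Q x = a *\<^sub>R fcalc (\<lambda>t. 1) Q x + k *\<^sub>R fcalc (\<lambda>t. t * t) Q x"
        unfolding \<psi>_def by (rule fcalc_lin[OF Q one sqc])
      also have "fcalc (\<lambda>t. t * t) Q x = Q (Q x)"
        using fcalc_mult[OF Q idc idc, of x] fcalc_id[OF Q] by simp
      finally show ?thesis using fcalc_const[OF Q, where a=1 and x=x] by simp
    qed
    have phinn: "0 \<le> 1 * t powr p + (-1) * \<psi> t" if t: "t \<in> {0..onorm Q}" for t
    proof -
      have t0: "0 \<le> t" using t by simp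
      have "(c0^2) powr (p/2) + (p/2) * (c0^2) powr (p/2 - 1) * (t^2 - c0^2) \<le> (t^2) powr (p/2)"
        using p c0 by (intro tangent_powr) simp_all
      then have "c0 powr p + k * (t^2 - c0^2) \<le> t powr p"
        using sq_powr[of t p] sq_powr[of c0 p] t0 c0 p by (simp add: k_def)
      then show ?thesis by (simp add: \<psi>_def a_def power2_eq_square algebra_simps)
    qed
    have phic: "continuous_on {0..onorm Q} (\<lambda>t. 1 * t powr p + (-1) * \<psi> t)"
      by (intro continuous_intros hc psic)
    have "0 \<le> Re (cinner (fcalc (\<lambda>t. 1 * t powr p + (-1) * \<psi> t) Q x) x)"
      by (rule fcalc_pos[OF Q phic phinn])
    also have "fcalc (\<lambda>t. 1 * t powr p + (-1) * \<psi> t) Q x = fcalc (\<lambda>t. t powr p) Q x - fcalc \<psi> Q x"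
      using fcalc_lin[OF Q hc psic, where a=1 and b="-1" and x=x] by simp
    also have "Re (cinner (fcalc (\<lambda>t. t powr p) Q x - fcalc \<psi> Q x) x)
        = Re (cinner (fcalc (\<lambda>t. t powr p) Q x) x) - (a + k * c0^2)"
    proof -
      have "cinner (Q (Q x)) x = cinner (Q x) (Q x)" using sa by (simp add: sadj_def)
      then show ?thesis
        by (simp add: psiQ cinner_diff_left cinner_add_left cinner_scaleR_left Re_cinner_self x c0_def)
    qed
    finally have "a + k * c0^2 \<le> Re (cinner (fcalc (\<lambda>t. t powr p) Q x) x)" by simp
    then show ?thesis by (simp add: a_def c0_def)
  qed
qed

lemma young2:
  fixes a b \<alpha> :: real
  assumes a: "0 \<le> a" and b: "0 \<le> b" and al: "0 < \<alpha>" "\<alpha> < 1"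
  shows "a * b \<le> \<alpha> * a powr (1/\<alpha>) + (1 - \<alpha>) * b powr (1/(1 - \<alpha>))"
proof -
  have "a * b \<le> a powr (1/\<alpha>) / (1/\<alpha>) + b powr (1/(1-\<alpha>)) / (1/(1-\<alpha>))"
    using al a b by (intro Youngs_inequality) (simp_all add: field_simps)
  then show ?thesis by (simp add: ac_simps)
qed

theorem theorem2p8:
  fixes A B :: "'a::chilbert_space \<Rightarrow> 'a"
    and f g :: "real \<Rightarrow> real"
    and x :: 'a and r s \<alpha> :: real
  assumes "bounded_clinear A" and "bounded_clinear B"
    and "continuous_on {0..} f" and "continuous_on {0..} g"
    and "\<forall>t\<ge>0. f t \<ge> 0" and "\<forall>t\<ge>0. g t \<ge> 0"
    and "\<forall>t\<ge>0. f t * g t = t"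
    and "norm x = 1"
    and "r \<ge> 1" and "s \<ge> 1"
    and "0 < \<alpha>" and "\<alpha> < 1"
  shows "cmod (cinner (A x) x) powr r * cmod (cinner (B x) x) powr s \<le>
    (1/2) * onorm (\<lambda>y.
        \<alpha> *\<^sub>R fcalc (\<lambda>t. t powr (2 * r / \<alpha>)) (fcalc f (op_abs A)) y
      + \<alpha> *\<^sub>R fcalc (\<lambda>t. t powr (2 * r / \<alpha>)) (fcalc g (op_abs (adj A))) y
      + (1-\<alpha>) *\<^sub>R fcalc (\<lambda>t. t powr (2 * s / (1 - \<alpha>))) (fcalc f (op_abs B)) y
      + (1-\<alpha>) *\<^sub>R fcalc (\<lambda>t. t powr (2 * s / (1 - \<alpha>))) (fcalc g (op_abs (adj B))) y)"
proof -
  have A: "bounded_clinear A" and B: "bounded_clinear B" using assms(1,2) .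
  have f: "continuous_on {0..} f" and g: "continuous_on {0..} g" using assms(3,4) .
  have fnn: "\<And>t. 0 \<le> t \<Longrightarrow> 0 \<le> f t" and gnn: "\<And>t. 0 \<le> t \<Longrightarrow> 0 \<le> g t" using assms(5,6) by auto
  have fg: "\<forall>t\<ge>0. f t * g t = t" using assms(7) .
  have x: "norm x = 1" using assms(8) .
  have r: "1 \<le> r" and s: "1 \<le> s" and al: "0 < \<alpha>" "\<alpha> < 1" using assms(9-12) by auto
  have absp: "posop (op_abs T)" if T: "bounded_clinear T" for T :: "'a \<Rightarrow> 'a"
    unfolding op_abs_def by (rule fcalc_sqrt_posop(1)[OF AstarA_posop(1)[OF T]])
  have Fpos: "posop (fcalc h (op_abs T))"
    if T: "bounded_clinear T" and h: "continuous_on {0..} h" and hn: "\<And>t. 0 \<le> t \<Longrightarrow> 0 \<le> h t"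
    for T :: "'a \<Rightarrow> 'a" and h
    by (rule fcalc_posop[OF absp[OF T] cont_sub[OF h]]) (use hn in auto)
  have A': "bounded_clinear (adj A)" and B': "bounded_clinear (adj B)" using adj_bclin A B by auto
  define FA where "FA = fcalc f (op_abs A)"
  define GA where "GA = fcalc g (op_abs (adj A))"
  define FB where "FB = fcalc f (op_abs B)"
  define GB where "GB = fcalc g (op_abs (adj B))"
  have pFA: "posop FA" unfolding FA_def by (rule Fpos[OF A f fnn])
  have pGA: "posop GA" unfolding GA_def by (rule Fpos[OF A' g gnn])
  have pFB: "posop FB" unfolding FB_def by (rule Fpos[OF B f fnn])
  have pGB: "posop GB" unfolding GB_def by (rule Fpos[OF B' g gnn])
  define p1 where "p1 = 2 * r / \<alpha>"
  define p2 where "p2 = 2 * s / (1 - \<alpha>)"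
  have p1: "2 \<le> p1"
  proof -
    have "2 * 1 \<le> 2 * r" using r by simp
    also have "2 * r \<le> 2 * r / \<alpha>" using al r by (simp add: le_divide_eq)
    finally show ?thesis by (simp add: p1_def)
  qed
  have p2: "2 \<le> p2"
  proof -
    have "2 * 1 \<le> 2 * s" using s by simp
    also have "2 * s \<le> 2 * s / (1 - \<alpha>)" using al s by (simp add: le_divide_eq)
    finally show ?thesis by (simp add: p2_def)
  qed
  define H1 where "H1 = fcalc (\<lambda>t. t powr p1) FA"
  define H2 where "H2 = fcalc (\<lambda>t. t powr p1) GA"
  define H3 where "H3 = fcalc (\<lambda>t. t powr p2) FB"
  define H4 where "H4 = fcalc (\<lambda>t. t powr p2) GB"
  have hc: "continuous_on {0..onorm Q} (\<lambda>t. t powr p)" if "2 \<le> p" for Q :: "'a \<Rightarrow> 'a" and p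
    using that by (intro continuous_on_powr' continuous_on_id continuous_on_const) auto
  have bH1: "bounded_clinear H1" unfolding H1_def by (rule fcalc_bclin[OF pFA hc[OF p1]])
  have bH2: "bounded_clinear H2" unfolding H2_def by (rule fcalc_bclin[OF pGA hc[OF p1]])
  have bH3: "bounded_clinear H3" unfolding H3_def by (rule fcalc_bclin[OF pFB hc[OF p2]])
  have bH4: "bounded_clinear H4" unfolding H4_def by (rule fcalc_bclin[OF pGB hc[OF p2]])
  define a1 where "a1 = norm (FA x)"
  define a2 where "a2 = norm (GA x)"
  define b1 where "b1 = norm (FB x)"
  define b2 where "b2 = norm (GB x)"
  have j1: "a1 powr p1 \<le> Re (cinner (H1 x) x)" unfolding a1_def H1_def by (rule jensen_op[OF pFA p1 x])
  have j2: "a2 powr p1 \<le> Re (cinner (H2 x) x)" unfolding a2_def H2_def by (rule jensen_op[OF pGA p1 x])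
  have j3: "b1 powr p2 \<le> Re (cinner (H3 x) x)" unfolding b1_def H3_def by (rule jensen_op[OF pFB p2 x])
  have j4: "b2 powr p2 \<le> Re (cinner (H4 x) x)" unfolding b2_def H4_def by (rule jensen_op[OF pGB p2 x])
  have msA: "cmod (cinner (A x) x) \<le> a1 * a2"
    unfolding a1_def a2_def FA_def GA_def by (rule mixed_schwarz[OF A f g fg])
  have msB: "cmod (cinner (B x) x) \<le> b1 * b2"
    unfolding b1_def b2_def FB_def GB_def by (rule mixed_schwarz[OF B f g fg])
  have nn: "0 \<le> a1" "0 \<le> a2" "0 \<le> b1" "0 \<le> b2" by (simp_all add: a1_def a2_def b1_def b2_def)
  define u1 where "u1 = a1 powr r * b1 powr s"
  define u2 where "u2 = a2 powr r * b2 powr s"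
  have "cmod (cinner (A x) x) powr r * cmod (cinner (B x) x) powr s \<le> (a1 * a2) powr r * (b1 * b2) powr s"
    using msA msB r s by (intro mult_mono powr_mono2) simp_all
  also have "\<dots> = u1 * u2" by (simp add: u1_def u2_def powr_mult ac_simps)
  also have "\<dots> \<le> (u1^2 + u2^2) / 2"
  proof -
    have "0 \<le> (u1 - u2)^2" by simp
    then show ?thesis by (simp add: power2_eq_square algebra_simps)
  qed
  also have "u1^2 = a1 powr (2 * r) * b1 powr (2 * s)"
    by (simp add: u1_def power2_eq_square powr_add[symmetric] mult_2 ac_simps powr_mult)
  also have "u2^2 = a2 powr (2 * r) * b2 powr (2 * s)"
    by (simp add: u2_def power2_eq_square powr_add[symmetric] mult_2 ac_simps powr_mult)
  also have "(a1 powr (2 * r) * b1 powr (2 * s) + a2 powr (2 * r) * b2 powr (2 * s)) / 2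
      \<le> ((\<alpha> * a1 powr p1 + (1 - \<alpha>) * b1 powr p2) + (\<alpha> * a2 powr p1 + (1 - \<alpha>) * b2 powr p2)) / 2"
  proof -
    have y: "a powr (2 * r) * b powr (2 * s) \<le> \<alpha> * a powr p1 + (1 - \<alpha>) * b powr p2" for a b :: real
    proof -
      have "a powr (2 * r) * b powr (2 * s)
          \<le> \<alpha> * (a powr (2 * r)) powr (1/\<alpha>) + (1 - \<alpha>) * (b powr (2 * s)) powr (1/(1 - \<alpha>))"
        by (rule young2[OF _ _ al]) simp_all
      also have "\<dots> = \<alpha> * a powr p1 + (1 - \<alpha>) * b powr p2"
        by (simp add: powr_powr p1_def p2_def)
      finally show ?thesis .
    qed
    show ?thesis using y[of a1 b1] y[of a2 b2] by simp
  qed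
  also have "\<dots> \<le> (\<alpha> * Re (cinner (H1 x) x) + \<alpha> * Re (cinner (H2 x) x)
      + (1 - \<alpha>) * Re (cinner (H3 x) x) + (1 - \<alpha>) * Re (cinner (H4 x) x)) / 2"
  proof -
    have m1: "\<alpha> * a1 powr p1 \<le> \<alpha> * Re (cinner (H1 x) x)" using j1 al by (intro mult_left_mono) simp_all
    have m2: "\<alpha> * a2 powr p1 \<le> \<alpha> * Re (cinner (H2 x) x)" using j2 al by (intro mult_left_mono) simp_all
    have m3: "(1 - \<alpha>) * b1 powr p2 \<le> (1 - \<alpha>) * Re (cinner (H3 x) x)" using j3 al by (intro mult_left_mono) simp_all
    have m4: "(1 - \<alpha>) * b2 powr p2 \<le> (1 - \<alpha>) * Re (cinner (H4 x) x)" using j4 al by (intro mult_left_mono) simp_all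
    have "(\<alpha> * a1 powr p1 + (1 - \<alpha>) * b1 powr p2) + (\<alpha> * a2 powr p1 + (1 - \<alpha>) * b2 powr p2)
        \<le> \<alpha> * Re (cinner (H1 x) x) + \<alpha> * Re (cinner (H2 x) x)
      + (1 - \<alpha>) * Re (cinner (H3 x) x) + (1 - \<alpha>) * Re (cinner (H4 x) x)"
      using m1 m2 m3 m4 by linarith
    from divide_right_mono[OF this, of 2] show ?thesis by simp
  qed
  also have "\<alpha> * Re (cinner (H1 x) x) + \<alpha> * Re (cinner (H2 x) x)
      + (1 - \<alpha>) * Re (cinner (H3 x) x) + (1 - \<alpha>) * Re (cinner (H4 x) x)
      = Re (cinner (\<alpha> *\<^sub>R H1 x + \<alpha> *\<^sub>R H2 x + (1-\<alpha>) *\<^sub>R H3 x + (1-\<alpha>) *\<^sub>R H4 x) x)"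
    by (simp add: cinner_add_left cinner_scaleR_left)
  also have "Re (cinner (\<alpha> *\<^sub>R H1 x + \<alpha> *\<^sub>R H2 x + (1-\<alpha>) *\<^sub>R H3 x + (1-\<alpha>) *\<^sub>R H4 x) x)
      \<le> onorm (\<lambda>y. \<alpha> *\<^sub>R H1 y + \<alpha> *\<^sub>R H2 y + (1-\<alpha>) *\<^sub>R H3 y + (1-\<alpha>) *\<^sub>R H4 y)"
  proof -
    define S where "S = (\<lambda>y. \<alpha> *\<^sub>R H1 y + \<alpha> *\<^sub>R H2 y + (1-\<alpha>) *\<^sub>R H3 y + (1-\<alpha>) *\<^sub>R H4 y)"
    have sc: "bounded_linear (\<lambda>y. c *\<^sub>R T y)" if "bounded_clinear T" for c and T :: "'a \<Rightarrow> 'a"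
      by (rule bounded_linear_compose[OF bounded_linear_scaleR_right bounded_clinear_linear[OF that]])
    have blS: "bounded_linear S" unfolding S_def
      by (intro bounded_linear_add sc bH1 bH2 bH3 bH4)
    have "Re (cinner (S x) x) \<le> cmod (cinner (S x) x)" by (rule complex_Re_le_cmod)
    also have "\<dots> \<le> norm (S x) * norm x" by (rule cauchy_schwarz)
    also have "\<dots> \<le> onorm S * norm x * norm x" by (intro mult_right_mono onorm[OF blS]) simp
    also have "\<dots> = onorm S" by (simp add: x)
    finally show ?thesis by (simp add: S_def)
  qed
  finally show ?thesis
    by (simp add: H1_def H2_def H3_def H4_def FA_def GA_def FB_def GB_def p1_def p2_def divide_right_mono)
qed

end
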